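(* Let $\mathcal{N}$ be any finite-dimensional quantum channel and $0\le\lambda<1$. Then for every admissible state $\rho$ for $\mathcal{N}$, \[ I(X;B)_\rho+\lambda I(A\rangle BX)_\rho\le \sup_{\sigma} I(X;B)_\sigma, \] the supremum being over admissible states $\sigma$ for $\mathcal{N}$. Consequently $f_\lambda(\mathcal{N})\le f_0(\mathcal{N})$ for $0\le\lambda<1$, so points of the one-shot CQ trade-off curve other than the classical-capacity point are obtained only from $\lambda\ge1$.
   Context: For a quantum channel $\mathcal{N}^{A'\to B}$ with isometric extension $U_{\mathcal{N}}^{A'\to BE}$, an admissible state is $\rho^{XABE}=\sum_x p_X(x)|x\rangle\langle x|^X\otimes U_{\mathcal{N}}(\phi_x^{AA'})U_{\mathcal{N}}^\dagger$ with $X$ a finite alphabet, $p_X$ a probability distribution, $A$ a finite-dimensional reference, each $\phi_x^{AA'}$ pure. Entropies base 2; $I(A\rangle BX)\equiv H(BX)-H(ABX)$. $f_\lambda(\mathcal{N})\equiv\sup_\rho[I(X;B)_\rho+\lambda I(A\rangle BX)_\rho]$ over admissible states. *)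

theory Defs
  imports "Jordan_Normal_Form.Char_Poly" "HOL-Library.Multiset"
begin

(* A composite system with dimensions d1,...,dk uses the flat index
   ((i1*d2 + i2)*d3 + i3)... (lexicographic / Kronecker ordering). *)

definition kron :: "complex mat \<Rightarrow> complex mat \<Rightarrow> complex mat" where
  "kron A B = mat (dim_row A * dim_row B) (dim_col A * dim_col B)
     (\<lambda>(i,j). A $$ (i div dim_row B, j div dim_col B) * B $$ (i mod dim_row B, j mod dim_col B))"

definition adj :: "complex mat \<Rightarrow> complex mat" where
  "adj A = mat (dim_col A) (dim_row A) (\<lambda>(i,j). cnj (A $$ (j,i)))"

definition outer :: "complex vec \<Rightarrow> complex mat" where
  "outer w = mat (dim_vec w) (dim_vec w) (\<lambda>(i,j). w $ i * cnj (w $ j))"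

definition proj :: "nat \<Rightarrow> nat \<Rightarrow> complex mat" where
  "proj n x = mat n n (\<lambda>(i,j). if i = x \<and> j = x then 1 else 0)"

definition ptrace2 :: "nat \<Rightarrow> nat \<Rightarrow> complex mat \<Rightarrow> complex mat" where
  "ptrace2 d1 d2 M = mat d1 d1 (\<lambda>(i,j). \<Sum>k<d2. M $$ (i*d2 + k, j*d2 + k))"

definition ptrace1 :: "nat \<Rightarrow> nat \<Rightarrow> complex mat \<Rightarrow> complex mat" where
  "ptrace1 d1 d2 M = mat d2 d2 (\<lambda>(i,j). \<Sum>k<d1. M $$ (k*d2 + i, k*d2 + j))"

definition ptrace_mid :: "nat \<Rightarrow> nat \<Rightarrow> nat \<Rightarrow> complex mat \<Rightarrow> complex mat" where
  "ptrace_mid d1 d2 d3 M = mat (d1*d3) (d1*d3) (\<lambda>(i,j).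
     \<Sum>k<d2. M $$ (((i div d3)*d2 + k)*d3 + i mod d3, ((j div d3)*d2 + k)*d3 + j mod d3))"

definition eigvals :: "complex mat \<Rightarrow> complex multiset" where
  "eigvals A = (THE M. char_poly A = prod_mset (image_mset (\<lambda>a. [:-a, 1:]) M))"

(* von Neumann entropy, base 2, with 0 log 0 = 0 (note log 2 0 = 0 in Isabelle) *)
definition vN_entropy :: "complex mat \<Rightarrow> real" where
  "vN_entropy \<rho> = sum_mset (image_mset (\<lambda>a. - (Re a * log 2 (Re a))) (eigvals \<rho>))"

(* V : A' -> B (x) E is an isometry; it is the isometric (Stinespring) extension of the
   channel N(\<rho>) = Tr_E (V \<rho> V^dagger). Every finite-dimensional channel arises this way. *)
definition isometry :: "nat \<Rightarrow> nat \<Rightarrow> nat \<Rightarrow> complex mat \<Rightarrow> bool" where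
  "isometry dA' dB dE V \<longleftrightarrow> 0 < dA' \<and> V \<in> carrier_mat (dB*dE) dA' \<and> adj V * V = 1\<^sub>m dA'"

(* the state rho^{XABE} = sum_x p(x) |x><x| (x) (1_A (x) V) phi_x (1_A (x) V)^dagger,
   phi_x = |psi_x><psi_x| pure on A A' *)
definition cq_state :: "nat \<Rightarrow> nat \<Rightarrow> complex mat \<Rightarrow> (nat \<Rightarrow> real) \<Rightarrow> (nat \<Rightarrow> complex vec) \<Rightarrow> complex mat" where
  "cq_state nX dA V p \<psi> =
     (let D = nX * (dA * dim_row V) in
      mat D D (\<lambda>(i,j). \<Sum>x<nX. complex_of_real (p x) *
          kron (proj nX x) (outer (kron (1\<^sub>m dA) V *\<^sub>v \<psi> x)) $$ (i,j)))"

(* admissible states, recorded as (|X|, dim A, rho^{XABE}) *)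
definition admissible_states :: "nat \<Rightarrow> nat \<Rightarrow> nat \<Rightarrow> complex mat \<Rightarrow> (nat \<times> nat \<times> complex mat) set" where
  "admissible_states dA' dB dE V =
     {(nX, dA, \<rho>) | nX dA \<rho>. \<exists>p \<psi>.
        0 < dA \<and> (\<forall>x<nX. 0 \<le> p x) \<and> (\<Sum>x<nX. p x) = 1 \<and>
        (\<forall>x<nX. \<psi> x \<in> carrier_vec (dA * dA') \<and> \<psi> x \<bullet>c \<psi> x = 1) \<and>
        \<rho> = cq_state nX dA V p \<psi>}"

definition rho_XAB :: "nat \<Rightarrow> nat \<Rightarrow> nat \<times> nat \<times> complex mat \<Rightarrow> complex mat" where
  "rho_XAB dB dE s = (case s of (nX, dA, \<rho>) \<Rightarrow> ptrace2 (nX*dA*dB) dE \<rho>)"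

definition rho_XB :: "nat \<Rightarrow> nat \<Rightarrow> nat \<times> nat \<times> complex mat \<Rightarrow> complex mat" where
  "rho_XB dB dE s = (case s of (nX, dA, \<rho>) \<Rightarrow> ptrace_mid nX dA dB (rho_XAB dB dE s))"

definition rho_X :: "nat \<Rightarrow> nat \<Rightarrow> nat \<times> nat \<times> complex mat \<Rightarrow> complex mat" where
  "rho_X dB dE s = (case s of (nX, dA, \<rho>) \<Rightarrow> ptrace2 nX dB (rho_XB dB dE s))"

definition rho_B :: "nat \<Rightarrow> nat \<Rightarrow> nat \<times> nat \<times> complex mat \<Rightarrow> complex mat" where
  "rho_B dB dE s = (case s of (nX, dA, \<rho>) \<Rightarrow> ptrace1 nX dB (rho_XB dB dE s))"

definition mutual_XB :: "nat \<Rightarrow> nat \<Rightarrow> nat \<times> nat \<times> complex mat \<Rightarrow> real" where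
  "mutual_XB dB dE s = vN_entropy (rho_X dB dE s) + vN_entropy (rho_B dB dE s) - vN_entropy (rho_XB dB dE s)"

definition coherent_info :: "nat \<Rightarrow> nat \<Rightarrow> nat \<times> nat \<times> complex mat \<Rightarrow> real" where
  "coherent_info dB dE s = vN_entropy (rho_XB dB dE s) - vN_entropy (rho_XAB dB dE s)"

definition f_lambda :: "nat \<Rightarrow> nat \<Rightarrow> nat \<Rightarrow> complex mat \<Rightarrow> real \<Rightarrow> real" where
  "f_lambda dA' dB dE V lam =
     Sup ((\<lambda>s. mutual_XB dB dE s + lam * coherent_info dB dE s) ` admissible_states dA' dB dE V)"

end

theory Submission
  imports Defs
begin


lemma poly_prod_lin_zero: "poly (prod_mset (image_mset (\<lambda>a. [:-a,1:]) M)) (b::complex) = 0 \<longleftrightarrow> b \<in># M"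
  by (induction M) auto

lemma prod_lin_inj:
  "prod_mset (image_mset (\<lambda>a. [:-a,1:]) M1) = prod_mset (image_mset (\<lambda>a::complex. [:-a,1:]) M2) \<Longrightarrow> M1 = M2"
proof (induction M1 arbitrary: M2)
  case empty
  show ?case
  proof (rule ccontr)
    assume "{#} \<noteq> M2"
    then obtain b where "b \<in># M2" by (metis multiset_nonemptyE)
    then have "poly (prod_mset (image_mset (\<lambda>a. [:-a,1:]) M2)) b = 0" using poly_prod_lin_zero by blast
    with empty show False by simp
  qed
next
  case (add a M1)
  have "poly (prod_mset (image_mset (\<lambda>a. [:-a,1:]) M2)) a = 0"
    using add.prems[symmetric] poly_prod_lin_zero[of "add_mset a M1" a] by simp
  then have "a \<in># M2" using poly_prod_lin_zero by blast
  then obtain M2' where M2: "M2 = add_mset a M2'" by (metis mset_add)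
  have "[:-a,1:] * prod_mset (image_mset (\<lambda>a. [:-a,1:]) M1) = [:-a,1:] * prod_mset (image_mset (\<lambda>a. [:-a,1:]) M2')"
    using add.prems M2 by simp
  then have "prod_mset (image_mset (\<lambda>a. [:-a,1:]) M1) = prod_mset (image_mset (\<lambda>a. [:-a,1:]) M2')"
    by (subst (asm) mult_left_cancel) auto
  then show ?case using add.IH M2 by simp
qed

lemma eigvals_eq:
  assumes "char_poly A = prod_mset (image_mset (\<lambda>a. [:-a,1:]) M)"
  shows "eigvals A = M"
  unfolding eigvals_def
  by (rule the_equality, rule assms, metis assms prod_lin_inj)

definition eta :: "real \<Rightarrow> real" where "eta t = - (t * log 2 t)"

definition onb :: "nat \<Rightarrow> (nat \<Rightarrow> nat \<Rightarrow> complex) \<Rightarrow> bool" where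
  "onb n e \<longleftrightarrow> (\<forall>i<n. \<forall>j<n. (\<Sum>a<n. e i a * cnj (e j a)) = (if i = j then 1 else 0))"

lemma onb_complete:
  assumes "onb n e" "a < n" "b < n"
  shows "(\<Sum>k<n. e k a * cnj (e k b)) = (if a = b then 1 else 0)"
proof -
  define U where "U = mat n n (\<lambda>(a,k). e k a)"
  define Uh where "Uh = mat n n (\<lambda>(k,a). cnj (e k a))"
  have U: "U \<in> carrier_mat n n" and Uh: "Uh \<in> carrier_mat n n" unfolding U_def Uh_def by auto
  have "Uh * U = 1\<^sub>m n"
  proof (rule eq_matI)
    fix i j assume ij: "i < dim_row (1\<^sub>m n)" "j < dim_col (1\<^sub>m n)"
    have "(Uh * U) $$ (i,j) = (\<Sum>a<n. cnj (e i a) * e j a)"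
      using ij unfolding U_def Uh_def by (auto simp: scalar_prod_def atLeast0LessThan intro!: sum.cong)
    also have "\<dots> = (\<Sum>a<n. e j a * cnj (e i a))" by (simp add: mult.commute)
    also have "\<dots> = (if j = i then 1 else 0)" using assms(1) ij unfolding onb_def by auto
    finally show "(Uh * U) $$ (i,j) = 1\<^sub>m n $$ (i,j)" using ij by auto
  qed (use U Uh in auto)
  then have "U * Uh = 1\<^sub>m n" using mat_mult_left_right_inverse[OF Uh U] by simp
  then have "(U * Uh) $$ (a,b) = (if a = b then 1 else 0)" using assms by simp
  moreover have "(U * Uh) $$ (a,b) = (\<Sum>k<n. e k a * cnj (e k b))"
    using assms unfolding U_def Uh_def by (auto simp: scalar_prod_def atLeast0LessThan intro!: sum.cong)
  ultimately show ?thesis by simp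
qed




lemma entropy_decomp:
  assumes M: "M \<in> carrier_mat n n" and e: "onb n e"
    and Md: "\<And>a b. a < n \<Longrightarrow> b < n \<Longrightarrow> M $$ (a,b) = (\<Sum>k<n. complex_of_real (d k) * e k a * cnj (e k b))"
  shows "vN_entropy M = (\<Sum>k<n. eta (d k))"
proof -
  define U where "U = mat n n (\<lambda>(a,k). e k a)"
  define Uh where "Uh = mat n n (\<lambda>(k,a). cnj (e k a))"
  define D where "D = mat n n (\<lambda>(i,j). if i = j then complex_of_real (d i) else 0)"
  have U: "U \<in> carrier_mat n n" and Uh: "Uh \<in> carrier_mat n n" and D: "D \<in> carrier_mat n n"
    unfolding U_def Uh_def D_def by auto
  have UhU: "Uh * U = 1\<^sub>m n"
  proof (rule eq_matI)
    fix i j assume ij: "i < dim_row (1\<^sub>m n)" "j < dim_col (1\<^sub>m n)"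
    have "(Uh * U) $$ (i,j) = (\<Sum>a<n. cnj (e i a) * e j a)"
      using ij unfolding U_def Uh_def by (auto simp: scalar_prod_def atLeast0LessThan intro!: sum.cong)
    also have "\<dots> = (\<Sum>a<n. e j a * cnj (e i a))" by (simp add: mult.commute)
    also have "\<dots> = (if j = i then 1 else 0)" using e ij unfolding onb_def by auto
    finally show "(Uh * U) $$ (i,j) = 1\<^sub>m n $$ (i,j)" using ij by auto
  qed (use U Uh in auto)
  then have UUh: "U * Uh = 1\<^sub>m n" using mat_mult_left_right_inverse[OF Uh U] by simp
  have UD: "U * D = mat n n (\<lambda>(a,k). e k a * complex_of_real (d k))"
  proof (rule eq_matI)
    fix a k assume ak: "a < dim_row (mat n n (\<lambda>(a,k). e k a * complex_of_real (d k)))"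
       "k < dim_col (mat n n (\<lambda>(a,k). e k a * complex_of_real (d k)))"
    have "(U * D) $$ (a,k) = (\<Sum>j<n. e j a * (if j = k then complex_of_real (d j) else 0))"
      using ak unfolding U_def D_def by (auto simp: scalar_prod_def atLeast0LessThan intro!: sum.cong)
    also have "\<dots> = e k a * complex_of_real (d k)"
      using ak by (simp add: if_distrib cong: if_cong)
    finally show "(U * D) $$ (a,k) = mat n n (\<lambda>(a,k). e k a * complex_of_real (d k)) $$ (a,k)"
      using ak by simp
  qed (use U D in auto)
  have MUDU: "M = U * D * Uh"
  proof (rule eq_matI)
    fix a b assume ab: "a < dim_row (U * D * Uh)" "b < dim_col (U * D * Uh)"
    then have ab': "a < n" "b < n" using U Uh by auto
    have "(U * D * Uh) $$ (a,b) = (\<Sum>k<n. e k a * complex_of_real (d k) * cnj (e k b))"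
      unfolding UD using ab' unfolding Uh_def by (auto simp: scalar_prod_def atLeast0LessThan intro!: sum.cong)
    also have "\<dots> = M $$ (a,b)" using Md[OF ab'] by (simp add: mult_ac)
    finally show "M $$ (a,b) = (U * D * Uh) $$ (a,b)" by simp
  qed (use M U D Uh in auto)
  have "similar_mat_wit M D U Uh"
    unfolding similar_mat_wit_def Let_def using M U D Uh UUh UhU MUDU by auto
  then have "char_poly M = char_poly D" using char_poly_similar similar_mat_def by blast
  also have "\<dots> = (\<Prod>a\<leftarrow>diag_mat D. [:- a, 1:])"
    by (rule char_poly_upper_triangular[OF D]) (auto simp: D_def upper_triangular_def)
  also have "diag_mat D = map (\<lambda>i. complex_of_real (d i)) [0..<n]"
    unfolding diag_mat_def D_def by (simp add: list_eq_iff_nth_eq)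
  also have "(\<Prod>a\<leftarrow>map (\<lambda>i. complex_of_real (d i)) [0..<n]. [:- a, 1:])
     = prod_mset (image_mset (\<lambda>a. [:-a,1:]) (mset (map (\<lambda>i. complex_of_real (d i)) [0..<n])))"
    unfolding mset_map[symmetric] prod_mset_prod_list by simp
  finally have "eigvals M = mset (map (\<lambda>i. complex_of_real (d i)) [0..<n])"
    by (rule eigvals_eq)
  then show ?thesis
    unfolding vN_entropy_def eta_def by (simp add: sum_unfold_sum_mset image_mset.compositionality o_def atLeast0LessThan)
qed




definition ip :: "nat \<Rightarrow> (nat \<Rightarrow> complex) \<Rightarrow> (nat \<Rightarrow> complex) \<Rightarrow> complex" where
  "ip n x y = (\<Sum>a<n. x a * cnj (y a))"

definition ortho :: "nat \<Rightarrow> nat \<Rightarrow> (nat \<Rightarrow> nat \<Rightarrow> complex) \<Rightarrow> bool" where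
  "ortho n m e \<longleftrightarrow> (\<forall>i<m. \<forall>j<m. ip n (e i) (e j) = (if i = j then 1 else 0))"

lemma onb_ortho: "onb n e \<longleftrightarrow> ortho n n e"
  unfolding onb_def ortho_def ip_def by simp

lemma ip_self_real: "ip n x x = complex_of_real (\<Sum>a<n. (cmod (x a))^2)"
  unfolding ip_def of_real_sum by (intro sum.cong) (simp_all, metis complex_norm_square of_real_power)

lemma delta_sum: "(a::nat) < n \<Longrightarrow> (\<Sum>b<n. (if a = b then 1 else 0) * (g b::complex)) = g a"
proof -
  assume a: "a < n"
  have "(\<Sum>b<n. (if a = b then 1 else 0) * g b) = (\<Sum>b<n. if a = b then g b else 0)" by (rule sum.cong) auto
  also have "\<dots> = g a" using a by (subst sum.delta') auto
  finally show ?thesis .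
qed

lemma delta_sum': "(a::nat) < n \<Longrightarrow> (\<Sum>b<n. (g b::complex) * (if a = b then 1 else 0)) = g a"
  using delta_sum[of a n g] by (simp add: mult.commute)

lemma unit_orth:
  assumes o: "ortho n m e" and mn: "m < n"
  shows "\<exists>v. ip n v v = 1 \<and> (\<forall>j<m. ip n v (e j) = 0)"
proof -
  define w where "w a b = (if a = b then 1 else 0) - (\<Sum>i<m. e i b * cnj (e i a))" for a b
  have worth: "ip n (w a) (e j) = 0" if "a < n" "j < m" for a j
  proof -
    have "ip n (w a) (e j) = (\<Sum>b<n. (if a = b then 1 else 0) * cnj (e j b)) - (\<Sum>b<n. \<Sum>i<m. e i b * cnj (e i a) * cnj (e j b))"
      unfolding ip_def w_def by (simp add: left_diff_distrib sum_subtractf sum_distrib_right)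
    also have "(\<Sum>b<n. (if a = b then 1 else 0) * cnj (e j b)) = cnj (e j a)" using that(1) by (rule delta_sum)
    also have "(\<Sum>b<n. \<Sum>i<m. e i b * cnj (e i a) * cnj (e j b)) = (\<Sum>i<m. cnj (e i a) * ip n (e i) (e j))"
      unfolding ip_def by (subst sum.swap) (simp add: sum_distrib_left mult_ac)
    also have "\<dots> = (\<Sum>i<m. cnj (e i a) * (if i = j then 1 else 0))"
      using o that unfolding ortho_def by (intro sum.cong) auto
    also have "\<dots> = cnj (e j a)" using that by (simp add: delta_sum' if_distrib cong: if_cong)
    finally show ?thesis by simp
  qed
  have "\<exists>a<n. ip n (w a) (w a) \<noteq> 0"
  proof (rule ccontr)
    assume "\<not> ?thesis"
    then have z: "\<forall>a<n. ip n (w a) (w a) = 0" by auto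
    have wz: "w a b = 0" if "a < n" "b < n" for a b
    proof -
      have "complex_of_real (\<Sum>b<n. (cmod (w a b))^2) = 0" using z that ip_self_real by metis
      then have "(\<Sum>b<n. (cmod (w a b))^2) = 0" by (simp only: of_real_eq_0_iff)
      then have "\<forall>b\<in>{..<n}. (cmod (w a b))^2 = 0" by (subst (asm) sum_nonneg_eq_0_iff) auto
      then show ?thesis using that by auto
    qed
    have "(\<Sum>a<n. (\<Sum>i<m. e i a * cnj (e i a))) = (\<Sum>a<n. (1::complex))"
      using wz unfolding w_def by (intro sum.cong) (auto simp: right_minus_eq, metis)
    moreover have "(\<Sum>a<n. (\<Sum>i<m. e i a * cnj (e i a))) = (\<Sum>i<m. ip n (e i) (e i))"
      unfolding ip_def by (rule sum.swap)
    moreover have "\<dots> = (\<Sum>i<m. (1::complex))" using o unfolding ortho_def by auto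
    ultimately have "of_nat n = (of_nat m :: complex)" by simp
    then show False using mn by simp
  qed
  then obtain a where a: "a < n" "ip n (w a) (w a) \<noteq> 0" by auto
  define r where "r = (\<Sum>b<n. (cmod (w a b))^2)"
  have r: "ip n (w a) (w a) = complex_of_real r" unfolding r_def by (rule ip_self_real)
  have rpos: "r > 0" using a r unfolding r_def by (metis less_eq_real_def of_real_0 sum_nonneg zero_le_power2)
  define v where "v b = complex_of_real (1 / sqrt r) * w a b" for b
  have "ip n v v = complex_of_real (1/sqrt r) * complex_of_real (1/sqrt r) * ip n (w a) (w a)"
    unfolding v_def ip_def by (simp add: sum_distrib_left mult_ac)
  also have "\<dots> = 1" using rpos r by (simp add: of_real_mult[symmetric] del: of_real_mult) 
  finally have v1: "ip n v v = 1" .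
  have "ip n v (e j) = 0" if "j < m" for j
  proof -
    have "ip n v (e j) = complex_of_real (1/sqrt r) * ip n (w a) (e j)"
      unfolding v_def ip_def by (simp add: sum_distrib_left mult_ac)
    then show ?thesis using worth[OF a(1) that] by simp
  qed
  then show ?thesis using v1 by blast
qed

lemma extend_ortho:
  assumes o: "ortho n m e" and mn: "m \<le> n"
  shows "\<exists>f. onb n f \<and> (\<forall>i<m. f i = e i)"
proof -
  have "\<exists>f. ortho n k f \<and> (\<forall>i<m. f i = e i)" if "m \<le> k" "k \<le> n" for k
    using that
  proof (induction k)
    case 0
    then show ?case using o by auto
  next
    case (Suc k)
    show ?case
    proof (cases "m = Suc k")
      case True
      then show ?thesis using o by auto
    next
      case False
      then obtain f where f: "ortho n k f" "\<forall>i<m. f i = e i" using Suc by auto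
      obtain v where v: "ip n v v = 1" "\<forall>j<k. ip n v (f j) = 0" using unit_orth[OF f(1)] Suc.prems by auto
      define g where "g = f(k := v)"
      have "ip n (g j) v = 0" if "j < k" for j
      proof -
        have "ip n (g j) v = cnj (ip n v (f j))" using that unfolding g_def ip_def by (simp add: mult.commute)
        then show ?thesis using v that by simp
      qed
      then have "ortho n (Suc k) g"
        using f(1) v unfolding ortho_def g_def
        by (auto simp: less_Suc_eq)
      moreover have "\<forall>i<m. g i = e i" using f False Suc.prems unfolding g_def by auto
      ultimately show ?thesis by blast
    qed
  qed
  then show ?thesis using mn unfolding onb_ortho by auto
qed

lemma onb_expand:
  assumes "onb n f" "a < n"
  shows "x a = (\<Sum>k<n. f k a * ip n x (f k))"
proof -
  have "(\<Sum>k<n. f k a * ip n x (f k)) = (\<Sum>b<n. x b * (\<Sum>k<n. f k a * cnj (f k b)))"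
    unfolding ip_def by (simp add: sum_distrib_left sum_distrib_right mult_ac) (rule sum.swap)
  also have "\<dots> = (\<Sum>b<n. x b * (if a = b then 1 else 0))"
    using onb_complete[OF assms(1) assms(2)] by (intro sum.cong) auto
  also have "\<dots> = x a" using assms(2) by (rule delta_sum')
  finally show ?thesis by simp
qed




definition mv :: "nat \<Rightarrow> complex mat \<Rightarrow> (nat \<Rightarrow> complex) \<Rightarrow> nat \<Rightarrow> complex" where
  "mv n M x = (\<lambda>a. \<Sum>b<n. M $$ (a,b) * x b)"

definition herm :: "nat \<Rightarrow> complex mat \<Rightarrow> bool" where
  "herm n M \<longleftrightarrow> (\<forall>a<n. \<forall>b<n. M $$ (a,b) = cnj (M $$ (b,a)))"

lemma sum_split_nat: "m \<le> n \<Longrightarrow> (\<Sum>k<n. g k) = (\<Sum>k<m. g k) + (\<Sum>i<n-m. (g::nat\<Rightarrow>complex) (m+i))"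
proof -
  assume "m \<le> n"
  then obtain d where n: "n = m + d" using le_Suc_ex by blast
  have "(\<Sum>k<m+d. g k) = (\<Sum>k<m. g k) + (\<Sum>i<d. g (m+i))" by (induction d) (simp_all add: add.assoc)
  then show ?thesis using n by simp
qed

lemma ip_herm: "herm n M \<Longrightarrow> ip n (mv n M x) y = ip n x (mv n M y)"
proof -
  assume h: "herm n M"
  have "ip n (mv n M x) y = (\<Sum>a<n. \<Sum>b<n. M $$ (a,b) * x b * cnj (y a))"
    unfolding ip_def mv_def by (simp add: sum_distrib_right)
  also have "\<dots> = (\<Sum>b<n. \<Sum>a<n. M $$ (a,b) * x b * cnj (y a))" by (rule sum.swap)
  also have "\<dots> = (\<Sum>b<n. x b * cnj (\<Sum>a<n. M $$ (b,a) * y a))"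
  proof (rule sum.cong[OF refl])
    fix b assume b: "b \<in> {..<n}"
    have "(\<Sum>a<n. M $$ (a,b) * x b * cnj (y a)) = (\<Sum>a<n. x b * (cnj (M $$ (b,a)) * cnj (y a)))"
    proof (rule sum.cong[OF refl])
      fix a assume a: "a \<in> {..<n}"
      have "M $$ (a,b) = cnj (M $$ (b,a))" using h a b unfolding herm_def by (metis lessThan_iff)
      then show "M $$ (a,b) * x b * cnj (y a) = x b * (cnj (M $$ (b,a)) * cnj (y a))" by (simp add: mult_ac)
    qed
    also have "\<dots> = x b * cnj (\<Sum>a<n. M $$ (b,a) * y a)" by (simp add: sum_distrib_left)
    finally show "(\<Sum>a<n. M $$ (a,b) * x b * cnj (y a)) = x b * cnj (\<Sum>a<n. M $$ (b,a) * y a)" .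
  qed
  also have "\<dots> = ip n x (mv n M y)" unfolding ip_def mv_def ..
  finally show ?thesis .
qed

lemma ip_conj: "ip n y x = cnj (ip n x y)"
  unfolding ip_def by (simp add: mult.commute)

lemma coeff_orth:
  assumes h: "herm n M" and ev: "\<forall>a<n. mv n M f a = complex_of_real dk * f a" and o: "ip n x f = 0"
  shows "ip n (mv n M x) f = 0"
proof -
  have "ip n (mv n M x) f = ip n x (mv n M f)" using ip_herm[OF h] .
  also have "\<dots> = ip n x (\<lambda>a. complex_of_real dk * f a)" unfolding ip_def using ev by (intro sum.cong) auto
  also have "\<dots> = complex_of_real dk * ip n x f" unfolding ip_def by (simp add: sum_distrib_left mult_ac)
  finally show ?thesis using o by simp
qed

lemma normalize_vec:
  assumes "ip n v v \<noteq> 0"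
  shows "\<exists>s::real. s > 0 \<and> ip n (\<lambda>a. complex_of_real s * v a) (\<lambda>a. complex_of_real s * v a) = 1"
proof -
  define r where "r = (\<Sum>b<n. (cmod (v b))^2)"
  have r: "ip n v v = complex_of_real r" unfolding r_def by (rule ip_self_real)
  have rpos: "r > 0" using assms r unfolding r_def by (metis less_eq_real_def of_real_0 sum_nonneg zero_le_power2)
  have "ip n (\<lambda>a. complex_of_real (1/sqrt r) * v a) (\<lambda>a. complex_of_real (1/sqrt r) * v a)
     = complex_of_real (1/sqrt r) * complex_of_real (1/sqrt r) * ip n v v"
    unfolding ip_def by (simp add: sum_distrib_left mult_ac)
  also have "\<dots> = 1" using rpos r by (simp add: of_real_mult[symmetric] del: of_real_mult)
  finally show ?thesis using rpos by (intro exI[of _ "1/sqrt r"]) auto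
qed

lemma spectral_step:
  assumes M: "M \<in> carrier_mat n n" and h: "herm n M" and mn: "m < n"
    and o: "ortho n m e" and ev: "\<forall>k<m. \<forall>a<n. mv n M (e k) a = complex_of_real (d k) * e k a"
  shows "\<exists>v c. ip n v v = 1 \<and> (\<forall>j<m. ip n v (e j) = 0) \<and> (\<forall>a<n. mv n M v a = complex_of_real c * v a)"
proof -
  obtain f where f: "onb n f" "\<forall>i<m. f i = e i" using extend_ortho[OF o] mn by auto
  have fo: "ip n (f i) (f j) = (if i = j then 1 else 0)" if "i < n" "j < n" for i j
    using f(1) that unfolding onb_ortho ortho_def by auto
  define C where "C = mat (n-m) (n-m) (\<lambda>(i,j). ip n (mv n M (f (m+j))) (f (m+i)))"
  have C: "C \<in> carrier_mat (n-m) (n-m)" unfolding C_def by auto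
  obtain as where as: "char_poly C = (\<Prod>a\<leftarrow>as. [:- a, 1:])" "length as = n - m"
    using char_poly_factorized[OF C] by auto
  then obtain c0 where "c0 \<in> set as" using mn by (cases as) auto
  then have "poly (char_poly C) c0 = 0" unfolding as(1)
    by (induction as) (auto)
  then have "eigenvalue C c0" using eigenvalue_root_char_poly[OF C] by simp
  then obtain w where w: "eigenvector C w c0" unfolding eigenvalue_def by auto
  have wdim: "dim_vec w = n - m" and wnz: "w \<noteq> 0\<^sub>v (n-m)" and Cw: "C *\<^sub>v w = c0 \<cdot>\<^sub>v w"
    using w C unfolding eigenvector_def by auto
  define v where "v a = (\<Sum>j<n-m. w $ j * f (m+j) a)" for a
  have ipv: "ip n v y = (\<Sum>j<n-m. w $ j * ip n (f (m+j)) y)" for y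
    unfolding v_def ip_def by (simp add: sum_distrib_right sum_distrib_left mult_ac) (rule sum.swap)
  have v_orth: "ip n v (f k) = 0" if "k < m" for k
    unfolding ipv using that mn by (intro sum.neutral) (auto simp: fo)
  have v_coef: "ip n v (f (m+i)) = w $ i" if "i < n-m" for i
  proof -
    have "ip n v (f (m+i)) = (\<Sum>j<n-m. w $ j * (if j = i then 1 else 0))"
      unfolding ipv using that by (intro sum.cong) (auto simp: fo)
    also have "\<dots> = w $ i" using that by (simp add: if_distrib cong: if_cong)
    finally show ?thesis .
  qed
  have Mv_lin: "mv n M v = (\<lambda>a. \<Sum>j<n-m. w $ j * mv n M (f (m+j)) a)"
  proof
    fix a
    have "mv n M v a = (\<Sum>b<n. \<Sum>j<n-m. w $ j * (M $$ (a,b) * f (m+j) b))"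
      unfolding mv_def v_def by (simp add: sum_distrib_left mult_ac)
    also have "\<dots> = (\<Sum>j<n-m. \<Sum>b<n. w $ j * (M $$ (a,b) * f (m+j) b))" by (rule sum.swap)
    also have "\<dots> = (\<Sum>j<n-m. w $ j * mv n M (f (m+j)) a)" unfolding mv_def by (simp add: sum_distrib_left)
    finally show "mv n M v a = (\<Sum>j<n-m. w $ j * mv n M (f (m+j)) a)" .
  qed
  have Mv_orth: "ip n (mv n M v) (f k) = 0" if "k < m" for k
    using coeff_orth[OF h _ v_orth[OF that]] ev f that by auto
  have Mv_coef: "ip n (mv n M v) (f (m+i)) = c0 * w $ i" if "i < n-m" for i
  proof -
    have "ip n (mv n M v) (f (m+i)) = (\<Sum>j<n-m. w $ j * ip n (mv n M (f (m+j))) (f (m+i)))"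
      unfolding Mv_lin ip_def by (simp add: sum_distrib_right sum_distrib_left mult_ac) (rule sum.swap)
    also have "\<dots> = (C *\<^sub>v w) $ i"
      using that wdim unfolding C_def by (auto simp: scalar_prod_def atLeast0LessThan mult_ac intro!: sum.cong)
    also have "\<dots> = c0 * w $ i" using Cw that wdim by simp
    finally show ?thesis .
  qed
  have Mv_eig: "mv n M v a = c0 * v a" if "a < n" for a
  proof -
    have "mv n M v a = (\<Sum>k<n. f k a * ip n (mv n M v) (f k))" using onb_expand[OF f(1) that] .
    also have "\<dots> = (\<Sum>k<m. f k a * ip n (mv n M v) (f k)) + (\<Sum>i<n-m. f (m+i) a * ip n (mv n M v) (f (m+i)))"
      using mn by (intro sum_split_nat) simp
    also have "\<dots> = (\<Sum>i<n-m. f (m+i) a * (c0 * w $ i))" using Mv_orth Mv_coef by simp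
    also have "\<dots> = c0 * v a" unfolding v_def by (simp add: sum_distrib_left mult_ac)
    finally show ?thesis .
  qed
  have vv: "ip n v v = (\<Sum>j<n-m. w $ j * cnj (w $ j))"
    unfolding ipv by (intro sum.cong) (auto simp: ip_conj[of n "f _" v] v_coef)
  have "ip n v v \<noteq> 0"
  proof
    assume "ip n v v = 0"
    moreover have "(\<Sum>j<n-m. w $ j * cnj (w $ j)) = complex_of_real (\<Sum>j<n-m. (cmod (w $ j))^2)"
      unfolding of_real_sum by (intro sum.cong) (simp_all, metis complex_norm_square of_real_power)
    ultimately have "complex_of_real (\<Sum>j<n-m. (cmod (w $ j))^2) = 0"
      unfolding vv by simp
    then have "(\<Sum>j<n-m. (cmod (w $ j))^2) = 0" by (simp only: of_real_eq_0_iff)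
    then have "\<forall>j\<in>{..<n-m}. (cmod (w $ j))^2 = 0" by (subst (asm) sum_nonneg_eq_0_iff) auto
    then have "w = 0\<^sub>v (n-m)" using wdim by (intro eq_vecI) auto
    then show False using wnz by simp
  qed
  then obtain s where s: "s > 0" "ip n (\<lambda>a. complex_of_real s * v a) (\<lambda>a. complex_of_real s * v a) = 1"
    using normalize_vec by blast
  define u where "u a = complex_of_real s * v a" for a
  have u1: "ip n u u = 1" using s unfolding u_def by simp
  have u_orth: "ip n u (e j) = 0" if "j < m" for j
    using v_orth[OF that] f that unfolding u_def ip_def by (simp add: sum_distrib_left[symmetric] mult.assoc)
  have u_eig: "mv n M u a = c0 * u a" if "a < n" for a
    using Mv_eig[OF that] unfolding u_def mv_def by (simp add: sum_distrib_left[symmetric] mult_ac)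
  have "ip n (mv n M u) u = ip n u (mv n M u)" using ip_herm[OF h] .
  then have "c0 * ip n u u = cnj c0 * ip n u u"
    unfolding ip_def using u_eig by (simp add: sum_distrib_left mult_ac)
  then have c0r: "c0 = complex_of_real (Re c0)" using u1 by (simp add: complex_eq_iff)
  show ?thesis
    by (rule exI[of _ u], rule exI[of _ "Re c0"]) (use u1 u_orth u_eig c0r in auto)
qed

lemma spectral:
  assumes M: "M \<in> carrier_mat n n" and h: "herm n M"
  shows "\<exists>e d. onb n e \<and> (\<forall>k<n. \<forall>a<n. mv n M (e k) a = complex_of_real (d k) * e k a)
     \<and> (\<forall>a<n. \<forall>b<n. M $$ (a,b) = (\<Sum>k<n. complex_of_real (d k) * e k a * cnj (e k b)))"
proof -
  have "\<exists>e d. ortho n m e \<and> (\<forall>k<m. \<forall>a<n. mv n M (e k) a = complex_of_real (d k) * e k a)" if "m \<le> n" for m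
    using that
  proof (induction m)
    case 0
    then show ?case unfolding ortho_def by auto
  next
    case (Suc m)
    then obtain e d where ed: "ortho n m e" "\<forall>k<m. \<forall>a<n. mv n M (e k) a = complex_of_real (d k) * e k a" by auto
    obtain v c where vc: "ip n v v = 1" "\<forall>j<m. ip n v (e j) = 0" "\<forall>a<n. mv n M v a = complex_of_real c * v a"
      using spectral_step[OF M h _ ed] Suc.prems by auto
    define e' where "e' = e(m := v)"
    define d' where "d' = d(m := c)"
    have "ip n (e j) v = 0" if "j < m" for j
      using vc(2) that ip_conj[of n "e j" v] by simp
    then have "ortho n (Suc m) e'" using ed(1) vc(1,2) unfolding ortho_def e'_def by (auto simp: less_Suc_eq)
    moreover have "\<forall>k<Suc m. \<forall>a<n. mv n M (e' k) a = complex_of_real (d' k) * e' k a"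
      using ed(2) vc(3) unfolding e'_def d'_def by (auto simp: less_Suc_eq)
    ultimately show ?case by blast
  qed
  then obtain e d where ed: "onb n e" "\<forall>k<n. \<forall>a<n. mv n M (e k) a = complex_of_real (d k) * e k a"
    unfolding onb_ortho by blast
  have "M $$ (a,b) = (\<Sum>k<n. complex_of_real (d k) * e k a * cnj (e k b))" if ab: "a < n" "b < n" for a b
  proof -
    have "M $$ (a,b) = (\<Sum>c<n. M $$ (a,c) * (if b = c then 1 else 0))"
      using ab(2) by (rule delta_sum'[symmetric])
    also have "\<dots> = (\<Sum>c<n. M $$ (a,c) * (\<Sum>k<n. e k c * cnj (e k b)))"
      using onb_complete[OF ed(1)] ab by (intro sum.cong) (auto simp: eq_commute)
    also have "\<dots> = (\<Sum>k<n. (\<Sum>c<n. M $$ (a,c) * e k c) * cnj (e k b))"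
      by (simp add: sum_distrib_left sum_distrib_right mult_ac) (rule sum.swap)
    also have "\<dots> = (\<Sum>k<n. complex_of_real (d k) * e k a * cnj (e k b))"
      using ed(2) ab unfolding mv_def by (intro sum.cong) auto
    finally show ?thesis .
  qed
  then show ?thesis using ed by blast
qed




lemma log2_le: "x > 0 \<Longrightarrow> log 2 x \<le> (x - 1) / ln 2"
proof -
  assume x: "x > 0"
  have "ln x \<le> x - 1" using ln_le_minus_one x by simp
  then show ?thesis unfolding log_def by (simp add: divide_right_mono)
qed

lemma jensen_log:
  fixes P s :: "nat \<Rightarrow> real"
  assumes P: "\<And>j. j < N \<Longrightarrow> P j \<ge> 0" and P1: "(\<Sum>j<N. P j) = 1"
    and s: "\<And>j. j < N \<Longrightarrow> P j > 0 \<Longrightarrow> s j > 0" and s0: "\<And>j. j < N \<Longrightarrow> s j \<ge> 0"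
  shows "(\<Sum>j<N. P j * s j) > 0 \<and> (\<Sum>j<N. P j * log 2 (s j)) \<le> log 2 (\<Sum>j<N. P j * s j)"
proof -
  define t where "t = (\<Sum>j<N. P j * s j)"
  obtain j0 where j0: "j0 < N" "P j0 > 0"
  proof (rule ccontr)
    assume "\<not> thesis"
    then have "\<forall>j<N. P j = 0" using P that by force
    then show False using P1 by simp
  qed
  have "t \<ge> P j0 * s j0" unfolding t_def
    using j0 P s0 by (intro member_le_sum) (auto intro: mult_nonneg_nonneg)
  moreover have "P j0 * s j0 > 0" using j0 s by simp
  ultimately have tpos: "t > 0" by linarith
  have trm: "P j * (log 2 (s j) - log 2 t) \<le> P j * (s j / t - 1) / ln 2" if "j < N" for j
  proof (cases "P j > 0")
    case True
    then have sj: "s j > 0" using s that by auto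
    have "log 2 (s j) - log 2 t = log 2 (s j / t)" using sj tpos by (simp add: log_divide)
    also have "\<dots> \<le> (s j / t - 1) / ln 2" using log2_le sj tpos by simp
    finally have "P j * (log 2 (s j) - log 2 t) \<le> P j * ((s j / t - 1) / ln 2)"
      using True by (intro mult_left_mono) auto
    then show ?thesis by simp
  next
    case False
    then have "P j = 0" using P that by force
    then show ?thesis by simp
  qed
  have "(\<Sum>j<N. P j * (log 2 (s j) - log 2 t)) \<le> (\<Sum>j<N. P j * (s j / t - 1) / ln 2)"
    by (rule sum_mono) (use trm in auto)
  also have "\<dots> = ((\<Sum>j<N. P j * s j) / t - (\<Sum>j<N. P j)) / ln 2"
    by (simp add: sum_divide_distrib[symmetric] sum_subtractf right_diff_distrib)
  also have "\<dots> = 0" using tpos P1 unfolding t_def by simp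
  finally have "(\<Sum>j<N. P j * log 2 (s j)) - (\<Sum>j<N. P j) * log 2 t \<le> 0"
    by (simp add: right_diff_distrib sum_subtractf sum_distrib_right)
  then show ?thesis using P1 tpos unfolding t_def by simp
qed

lemma gibbs:
  fixes l t :: "nat \<Rightarrow> real"
  assumes l: "\<And>i. i < N \<Longrightarrow> l i \<ge> 0" and l1: "(\<Sum>i<N. l i) = 1"
    and t: "\<And>i. i < N \<Longrightarrow> t i \<ge> 0" and t1: "(\<Sum>i<N. t i) \<le> 1"
    and lt: "\<And>i. i < N \<Longrightarrow> l i > 0 \<Longrightarrow> t i > 0"
  shows "(\<Sum>i<N. l i * log 2 (t i)) \<le> (\<Sum>i<N. l i * log 2 (l i))"
proof -
  have trm: "l i * (log 2 (t i) - log 2 (l i)) \<le> (t i - l i) / ln 2" if "i < N" for i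
  proof (cases "l i > 0")
    case True
    then have ti: "t i > 0" using lt that by auto
    have "log 2 (t i) - log 2 (l i) = log 2 (t i / l i)" using ti True by (simp add: log_divide)
    also have "\<dots> \<le> (t i / l i - 1) / ln 2" using log2_le ti True by simp
    finally have "l i * (log 2 (t i) - log 2 (l i)) \<le> l i * ((t i / l i - 1) / ln 2)"
      using True by (intro mult_left_mono) auto
    also have "\<dots> = (t i - l i) / ln 2" using True by (simp add: field_simps)
    finally show ?thesis .
  next
    case False
    then have "l i = 0" using l that by force
    then show ?thesis using t that by simp
  qed
  have "(\<Sum>i<N. l i * (log 2 (t i) - log 2 (l i))) \<le> (\<Sum>i<N. (t i - l i) / ln 2)"
    by (rule sum_mono) (use trm in auto)
  also have "\<dots> = ((\<Sum>i<N. t i) - (\<Sum>i<N. l i)) / ln 2"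
    by (simp add: sum_divide_distrib[symmetric] sum_subtractf)
  also have "\<dots> \<le> 0" using t1 l1 by (simp add: divide_nonpos_pos)
  finally show ?thesis by (simp add: right_diff_distrib sum_subtractf)
qed

lemma sum_swap3: "(\<Sum>y\<in>A. \<Sum>i\<in>B. \<Sum>j\<in>C. f y i j) = (\<Sum>j\<in>C. \<Sum>y\<in>A. \<Sum>i\<in>B. f y i j)"
proof -
  have "(\<Sum>y\<in>A. \<Sum>i\<in>B. \<Sum>j\<in>C. f y i j) = (\<Sum>y\<in>A. \<Sum>j\<in>C. \<Sum>i\<in>B. f y i j)"
    by (rule sum.cong[OF refl], rule sum.swap)
  also have "\<dots> = (\<Sum>j\<in>C. \<Sum>y\<in>A. \<Sum>i\<in>B. f y i j)" by (rule sum.swap)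
  finally show ?thesis .
qed

lemma concav_scalar:
  fixes q :: "nat \<Rightarrow> real" and lam :: "nat \<Rightarrow> nat \<Rightarrow> real" and P :: "nat \<Rightarrow> nat \<Rightarrow> nat \<Rightarrow> real"
    and s :: "nat \<Rightarrow> real"
  assumes q: "\<And>y. y < R \<Longrightarrow> q y \<ge> 0" and q1: "(\<Sum>y<R. q y) = 1"
    and lam: "\<And>y i. y < R \<Longrightarrow> i < N \<Longrightarrow> lam y i \<ge> 0" and lam1: "\<And>y. y < R \<Longrightarrow> (\<Sum>i<N. lam y i) = 1"
    and P: "\<And>y i j. y < R \<Longrightarrow> i < N \<Longrightarrow> j < N \<Longrightarrow> P y i j \<ge> 0"
    and Prow: "\<And>y i. y < R \<Longrightarrow> i < N \<Longrightarrow> (\<Sum>j<N. P y i j) = 1"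
    and Pcol: "\<And>y j. y < R \<Longrightarrow> j < N \<Longrightarrow> (\<Sum>i<N. P y i j) = 1"
    and s: "\<And>j. j < N \<Longrightarrow> s j = (\<Sum>y<R. q y * (\<Sum>i<N. lam y i * P y i j))"
  shows "(\<Sum>y<R. q y * (\<Sum>i<N. eta (lam y i))) \<le> (\<Sum>j<N. eta (s j))"
proof -
  have s0: "s j \<ge> 0" if "j < N" for j
    unfolding s[OF that] using q lam P that by (intro sum_nonneg mult_nonneg_nonneg) auto
  have sbig: "s j \<ge> q y * (lam y i * P y i j)" if "j < N" "y < R" "i < N" for j y i
  proof -
    have "q y * (lam y i * P y i j) \<le> q y * (\<Sum>i<N. lam y i * P y i j)"
      using that q lam P by (intro mult_left_mono member_le_sum) auto
    also have "\<dots> \<le> s j" unfolding s[OF that(1)]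
      using that q lam P by (intro member_le_sum[of y "{..<R}" "\<lambda>y. q y * (\<Sum>i<N. lam y i * P y i j)"] mult_nonneg_nonneg sum_nonneg) auto
    finally show ?thesis .
  qed
  have ssum: "(\<Sum>j<N. s j) = 1"
  proof -
    have "(\<Sum>j<N. s j) = (\<Sum>j<N. \<Sum>y<R. \<Sum>i<N. q y * lam y i * P y i j)"
      using s by (simp add: sum_distrib_left mult_ac)
    also have "\<dots> = (\<Sum>y<R. \<Sum>i<N. \<Sum>j<N. q y * lam y i * P y i j)"
      by (rule sum_swap3[symmetric])
    also have "\<dots> = (\<Sum>y<R. \<Sum>i<N. q y * lam y i)"
      using Prow by (simp add: sum_distrib_left[symmetric])
    also have "\<dots> = (\<Sum>y<R. q y)" using lam1 by (simp add: sum_distrib_left[symmetric])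
    finally show ?thesis using q1 by simp
  qed
  have per_y: "q y * (\<Sum>i<N. eta (lam y i)) \<le> q y * (\<Sum>i<N. lam y i * (\<Sum>j<N. P y i j * (- log 2 (s j))))"
    if y: "y < R" for y
  proof (cases "q y > 0")
    case False
    then have "q y = 0" using q y by force
    then show ?thesis by simp
  next
    case qpos: True
    define t where "t i = (\<Sum>j<N. P y i j * s j)" for i
    have jen: "(\<Sum>j<N. P y i j * log 2 (s j)) \<le> log 2 (t i)" and tpos: "t i > 0"
      if i: "i < N" "lam y i > 0" for i
    proof -
      have spos: "s j > 0" if "j < N" "P y i j > 0" for j
      proof -
        have "q y * (lam y i * P y i j) > 0" using qpos i that by simp
        then show ?thesis using sbig[OF that(1) y i(1)] by linarith
      qed
      show "(\<Sum>j<N. P y i j * log 2 (s j)) \<le> log 2 (t i)" "t i > 0"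
        using jensen_log[of N "P y i" s] P[OF y i(1)] Prow[OF y i(1)] spos s0 unfolding t_def by auto
    qed
    have t0: "t i \<ge> 0" if "i < N" for i unfolding t_def using P y that s0 by (intro sum_nonneg mult_nonneg_nonneg) auto
    have tsum: "(\<Sum>i<N. t i) \<le> 1"
    proof -
      have "(\<Sum>i<N. t i) = (\<Sum>j<N. (\<Sum>i<N. P y i j) * s j)"
        unfolding t_def by (simp add: sum_distrib_right) (rule sum.swap)
      also have "\<dots> = (\<Sum>j<N. s j)" using Pcol y by simp
      finally show ?thesis using ssum by simp
    qed
    have gb: "(\<Sum>i<N. lam y i * log 2 (t i)) \<le> (\<Sum>i<N. lam y i * log 2 (lam y i))"
      by (rule gibbs) (use lam y lam1 t0 tsum tpos in auto)
    have "(\<Sum>i<N. eta (lam y i)) = - (\<Sum>i<N. lam y i * log 2 (lam y i))"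
      unfolding eta_def by (simp add: sum_negf)
    also have "\<dots> \<le> - (\<Sum>i<N. lam y i * log 2 (t i))" using gb by simp
    also have "\<dots> \<le> (\<Sum>i<N. lam y i * (\<Sum>j<N. P y i j * (- log 2 (s j))))"
    proof -
      have "lam y i * log 2 (t i) \<ge> lam y i * (\<Sum>j<N. P y i j * log 2 (s j))" if "i < N" for i
      proof (cases "lam y i > 0")
        case True
        then show ?thesis using jen[OF that True] by (intro mult_left_mono) auto
      next
        case False
        then have "lam y i = 0" using lam y that by force
        then show ?thesis by simp
      qed
      then have "(\<Sum>i<N. lam y i * (\<Sum>j<N. P y i j * log 2 (s j))) \<le> (\<Sum>i<N. lam y i * log 2 (t i))"
        by (intro sum_mono) auto
      then show ?thesis by (simp add: sum_negf)
    qed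
    finally show ?thesis using qpos by (intro mult_left_mono) auto
  qed
  have "(\<Sum>y<R. q y * (\<Sum>i<N. eta (lam y i))) \<le> (\<Sum>y<R. q y * (\<Sum>i<N. lam y i * (\<Sum>j<N. P y i j * (- log 2 (s j)))))"
    by (intro sum_mono) (use per_y in auto)
  also have "\<dots> = (\<Sum>y<R. \<Sum>i<N. \<Sum>j<N. q y * lam y i * P y i j * (- log 2 (s j)))"
    by (simp add: sum_distrib_left mult_ac)
  also have "\<dots> = (\<Sum>j<N. \<Sum>y<R. \<Sum>i<N. q y * lam y i * P y i j * (- log 2 (s j)))"
    by (rule sum_swap3)
  also have "\<dots> = (\<Sum>j<N. s j * (- log 2 (s j)))"
    using s by (simp add: sum_distrib_left sum_distrib_right mult_ac sum_negf)
  also have "\<dots> = (\<Sum>j<N. eta (s j))" unfolding eta_def by simp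
  finally show ?thesis .
qed




definition psd :: "nat \<Rightarrow> complex mat \<Rightarrow> bool" where
  "psd n M \<longleftrightarrow> (\<forall>x. 0 \<le> Re (ip n (mv n M x) x))"

definition tr :: "nat \<Rightarrow> complex mat \<Rightarrow> complex" where
  "tr n M = (\<Sum>a<n. M $$ (a,a))"

lemma parseval:
  assumes g: "onb n g"
  shows "complex_of_real (\<Sum>k<n. (cmod (ip n x (g k)))^2) = ip n x x"
proof -
  have "ip n x x = (\<Sum>a<n. (\<Sum>k<n. g k a * ip n x (g k)) * cnj (x a))"
    unfolding ip_def using onb_expand[OF g, of _ x] by (intro sum.cong) (auto simp: ip_def)
  also have "\<dots> = (\<Sum>k<n. ip n x (g k) * (\<Sum>a<n. g k a * cnj (x a)))"
    by (simp add: sum_distrib_right sum_distrib_left mult_ac) (rule sum.swap)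
  also have "\<dots> = (\<Sum>k<n. ip n x (g k) * cnj (ip n x (g k)))"
    unfolding ip_def by (simp add: mult.commute)
  also have "\<dots> = complex_of_real (\<Sum>k<n. (cmod (ip n x (g k)))^2)"
    unfolding of_real_sum by (intro sum.cong) (simp_all, metis complex_norm_square of_real_power)
  finally show ?thesis by simp
qed

lemma spec_full:
  assumes M: "M \<in> carrier_mat n n" and h: "herm n M"
  shows "\<exists>e d. onb n e \<and> (\<forall>k<n. \<forall>a<n. mv n M (e k) a = complex_of_real (d k) * e k a)
     \<and> (\<forall>a<n. \<forall>b<n. M $$ (a,b) = (\<Sum>k<n. complex_of_real (d k) * e k a * cnj (e k b)))
     \<and> vN_entropy M = (\<Sum>k<n. eta (d k))
     \<and> tr n M = complex_of_real (\<Sum>k<n. d k)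
     \<and> (\<forall>x. ip n (mv n M x) x = complex_of_real (\<Sum>k<n. d k * (cmod (ip n x (e k)))^2))
     \<and> (psd n M \<longrightarrow> (\<forall>k<n. d k \<ge> 0))"
proof -
  obtain e d where e: "onb n e" and ev: "\<forall>k<n. \<forall>a<n. mv n M (e k) a = complex_of_real (d k) * e k a"
    and dec: "\<forall>a<n. \<forall>b<n. M $$ (a,b) = (\<Sum>k<n. complex_of_real (d k) * e k a * cnj (e k b))"
    using spectral[OF M h] by blast
  have ent: "vN_entropy M = (\<Sum>k<n. eta (d k))" using entropy_decomp[OF M e] dec by blast
  have ee: "ip n (e k) (e k) = 1" if "k < n" for k using e that unfolding onb_ortho ortho_def by auto
  have trace: "tr n M = complex_of_real (\<Sum>k<n. d k)"
  proof -
    have "tr n M = (\<Sum>a<n. \<Sum>k<n. complex_of_real (d k) * e k a * cnj (e k a))"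
      unfolding tr_def using dec by simp
    also have "\<dots> = (\<Sum>k<n. complex_of_real (d k) * ip n (e k) (e k))"
      unfolding ip_def by (subst sum.swap) (simp add: sum_distrib_left mult_ac)
    also have "\<dots> = (\<Sum>k<n. complex_of_real (d k))" using ee by simp
    finally show ?thesis by simp
  qed
  have quad: "ip n (mv n M x) x = complex_of_real (\<Sum>k<n. d k * (cmod (ip n x (e k)))^2)" for x
  proof -
    have mvx: "mv n M x a = (\<Sum>k<n. complex_of_real (d k) * e k a * ip n x (e k))" if "a < n" for a
    proof -
      have "mv n M x a = (\<Sum>b<n. \<Sum>k<n. complex_of_real (d k) * e k a * (cnj (e k b) * x b))"
        unfolding mv_def using dec that by (simp add: sum_distrib_right sum_distrib_left mult_ac)
      also have "\<dots> = (\<Sum>k<n. \<Sum>b<n. complex_of_real (d k) * e k a * (cnj (e k b) * x b))" by (rule sum.swap)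
      also have "\<dots> = (\<Sum>k<n. complex_of_real (d k) * e k a * ip n x (e k))"
        unfolding ip_def by (simp add: sum_distrib_left mult_ac)
      finally show ?thesis .
    qed
    have "ip n (mv n M x) x = (\<Sum>a<n. mv n M x a * cnj (x a))" by (simp add: ip_def)
    also have "\<dots> = (\<Sum>a<n. (\<Sum>k<n. complex_of_real (d k) * e k a * ip n x (e k)) * cnj (x a))"
      using mvx by (intro sum.cong) auto
    also have "\<dots> = (\<Sum>k<n. complex_of_real (d k) * ip n x (e k) * (\<Sum>a<n. e k a * cnj (x a)))"
      by (simp add: sum_distrib_right sum_distrib_left mult_ac) (rule sum.swap)
    also have "\<dots> = (\<Sum>k<n. complex_of_real (d k) * (ip n x (e k) * cnj (ip n x (e k))))"
      unfolding ip_def by (simp add: mult_ac)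
    also have "\<dots> = complex_of_real (\<Sum>k<n. d k * (cmod (ip n x (e k)))^2)"
      unfolding of_real_sum by (intro sum.cong) (simp_all, metis complex_norm_square of_real_power of_real_mult)
    finally show ?thesis .
  qed
  have "d k \<ge> 0" if "psd n M" "k < n" for k
  proof -
    have "ip n (mv n M (e k)) (e k) = complex_of_real (d k) * ip n (e k) (e k)"
      unfolding ip_def using ev that(2) by (simp add: sum_distrib_left mult_ac)
    then have "ip n (mv n M (e k)) (e k) = complex_of_real (d k)" using ee[OF that(2)] by simp
    then show ?thesis using that(1) unfolding psd_def by (metis Re_complex_of_real)
  qed
  then show ?thesis using e ev dec ent trace quad by blast
qed

lemma ip_mv_comb:
  fixes \<rho> :: "nat \<Rightarrow> complex mat" and q :: "nat \<Rightarrow> real"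
  assumes "\<forall>a<n. \<forall>b<n. S $$ (a,b) = (\<Sum>y<R. complex_of_real (q y) * \<rho> y $$ (a,b))"
  shows "ip n (mv n S x) x = (\<Sum>y<R. complex_of_real (q y) * ip n (mv n (\<rho> y) x) x)"
proof -
  have "mv n S x a = (\<Sum>y<R. complex_of_real (q y) * mv n (\<rho> y) x a)" if "a < n" for a
  proof -
    have "mv n S x a = (\<Sum>b<n. \<Sum>y<R. complex_of_real (q y) * (\<rho> y $$ (a,b) * x b))"
      unfolding mv_def using assms that by (simp add: sum_distrib_right sum_distrib_left mult_ac)
    also have "\<dots> = (\<Sum>y<R. \<Sum>b<n. complex_of_real (q y) * (\<rho> y $$ (a,b) * x b))" by (rule sum.swap)
    finally show ?thesis unfolding mv_def by (simp add: sum_distrib_left)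
  qed
  then have "ip n (mv n S x) x = (\<Sum>a<n. (\<Sum>y<R. complex_of_real (q y) * mv n (\<rho> y) x a) * cnj (x a))"
    unfolding ip_def[of n "mv n S x"] by (intro sum.cong) auto
  also have "\<dots> = (\<Sum>y<R. \<Sum>a<n. complex_of_real (q y) * (mv n (\<rho> y) x a * cnj (x a)))"
    by (simp add: sum_distrib_right sum_distrib_left mult_ac) (rule sum.swap)
  also have "\<dots> = (\<Sum>y<R. complex_of_real (q y) * ip n (mv n (\<rho> y) x) x)"
    unfolding ip_def by (simp add: sum_distrib_left)
  finally show ?thesis .
qed

lemma concavity:
  fixes \<rho> :: "nat \<Rightarrow> complex mat" and q :: "nat \<Rightarrow> real"
  assumes rho: "\<forall>y<R. \<rho> y \<in> carrier_mat n n \<and> herm n (\<rho> y) \<and> psd n (\<rho> y) \<and> tr n (\<rho> y) = 1"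
    and q: "\<forall>y<R. q y \<ge> 0" and q1: "(\<Sum>y<R. q y) = 1"
    and S: "S \<in> carrier_mat n n" "herm n S"
    and Sdef: "\<forall>a<n. \<forall>b<n. S $$ (a,b) = (\<Sum>y<R. complex_of_real (q y) * \<rho> y $$ (a,b))"
  shows "(\<Sum>y<R. q y * vN_entropy (\<rho> y)) \<le> vN_entropy S"
proof -
  have "\<forall>y\<in>{..<R}. \<exists>ed. onb n (fst ed) \<and> vN_entropy (\<rho> y) = (\<Sum>k<n. eta (snd ed k))
     \<and> tr n (\<rho> y) = complex_of_real (\<Sum>k<n. snd ed k)
     \<and> (\<forall>x. ip n (mv n (\<rho> y) x) x = complex_of_real (\<Sum>k<n. snd ed k * (cmod (ip n x (fst ed k)))^2))
     \<and> (\<forall>k<n. snd ed k \<ge> 0)"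
  proof
    fix y assume y: "y \<in> {..<R}"
    have ry: "\<rho> y \<in> carrier_mat n n" "herm n (\<rho> y)" using rho y by auto
    obtain e d where "onb n e \<and> (\<forall>k<n. \<forall>a<n. mv n (\<rho> y) (e k) a = complex_of_real (d k) * e k a)
     \<and> (\<forall>a<n. \<forall>b<n. \<rho> y $$ (a,b) = (\<Sum>k<n. complex_of_real (d k) * e k a * cnj (e k b)))
     \<and> vN_entropy (\<rho> y) = (\<Sum>k<n. eta (d k))
     \<and> tr n (\<rho> y) = complex_of_real (\<Sum>k<n. d k)
     \<and> (\<forall>x. ip n (mv n (\<rho> y) x) x = complex_of_real (\<Sum>k<n. d k * (cmod (ip n x (e k)))^2))
     \<and> (psd n (\<rho> y) \<longrightarrow> (\<forall>k<n. d k \<ge> 0))" using spec_full[OF ry] by blast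
    then show "\<exists>ed. onb n (fst ed) \<and> vN_entropy (\<rho> y) = (\<Sum>k<n. eta (snd ed k))
     \<and> tr n (\<rho> y) = complex_of_real (\<Sum>k<n. snd ed k)
     \<and> (\<forall>x. ip n (mv n (\<rho> y) x) x = complex_of_real (\<Sum>k<n. snd ed k * (cmod (ip n x (fst ed k)))^2))
     \<and> (\<forall>k<n. snd ed k \<ge> 0)" using rho y by (intro exI[of _ "(e,d)"]) auto
  qed
  from bchoice[OF this] obtain ED where EDb: "\<forall>y\<in>{..<R}. onb n (fst (ED y)) \<and> vN_entropy (\<rho> y) = (\<Sum>k<n. eta (snd (ED y) k))
     \<and> tr n (\<rho> y) = complex_of_real (\<Sum>k<n. snd (ED y) k)
     \<and> (\<forall>x. ip n (mv n (\<rho> y) x) x = complex_of_real (\<Sum>k<n. snd (ED y) k * (cmod (ip n x (fst (ED y) k)))^2))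
     \<and> (\<forall>k<n. snd (ED y) k \<ge> 0)" by blast
  have ED: "\<And>y. y < R \<Longrightarrow> onb n (fst (ED y)) \<and> vN_entropy (\<rho> y) = (\<Sum>k<n. eta (snd (ED y) k))
     \<and> tr n (\<rho> y) = complex_of_real (\<Sum>k<n. snd (ED y) k)
     \<and> (\<forall>x. ip n (mv n (\<rho> y) x) x = complex_of_real (\<Sum>k<n. snd (ED y) k * (cmod (ip n x (fst (ED y) k)))^2))
     \<and> (\<forall>k<n. snd (ED y) k \<ge> 0)" using EDb lessThan_iff by blast
  define A where "A y = fst (ED y)" for y
  define L where "L y = snd (ED y)" for y
  obtain f s where f: "onb n f" and fev: "\<forall>k<n. \<forall>a<n. mv n S (f k) a = complex_of_real (s k) * f k a"
    and Sent: "vN_entropy S = (\<Sum>k<n. eta (s k))"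
    using spec_full[OF S] by blast
  define P where "P y i j = (cmod (ip n (A y i) (f j)))^2" for y i j
  have "(\<Sum>y<R. q y * (\<Sum>i<n. eta (L y i))) \<le> (\<Sum>j<n. eta (s j))"
  proof (rule concav_scalar[where P = P])
    show "\<And>y. y < R \<Longrightarrow> 0 \<le> q y" using q by auto
    show "(\<Sum>y<R. q y) = 1" by (rule q1)
    show "\<And>y i. y < R \<Longrightarrow> i < n \<Longrightarrow> 0 \<le> L y i" using ED unfolding L_def by auto
    show "(\<Sum>i<n. L y i) = 1" if "y < R" for y
      using ED[OF that] rho that unfolding L_def by (metis of_real_eq_1_iff)
    show "\<And>y i j. y < R \<Longrightarrow> i < n \<Longrightarrow> j < n \<Longrightarrow> 0 \<le> P y i j" unfolding P_def by auto
    show "(\<Sum>j<n. P y i j) = 1" if "y < R" "i < n" for y i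
    proof -
      have "complex_of_real (\<Sum>j<n. P y i j) = ip n (A y i) (A y i)" unfolding P_def by (rule parseval[OF f])
      also have "\<dots> = 1" using ED[OF that(1)] that(2) unfolding A_def onb_ortho ortho_def by auto
      finally show ?thesis by (metis of_real_eq_1_iff)
    qed
    show "(\<Sum>i<n. P y i j) = 1" if "y < R" "j < n" for y j
    proof -
      have "P y i j = (cmod (ip n (f j) (A y i)))^2" for i
        unfolding P_def by (subst ip_conj) simp
      then have "complex_of_real (\<Sum>i<n. P y i j) = ip n (f j) (f j)"
        using parseval[of n "A y" "f j"] ED[OF that(1)] unfolding A_def by simp
      also have "\<dots> = 1" using f that(2) unfolding onb_ortho ortho_def by auto
      finally show ?thesis by (metis of_real_eq_1_iff)
    qed
    show "s j = (\<Sum>y<R. q y * (\<Sum>i<n. L y i * P y i j))" if "j < n" for j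
    proof -
      have ff: "ip n (f j) (f j) = 1" using f that unfolding onb_ortho ortho_def by auto
      have "ip n (mv n S (f j)) (f j) = complex_of_real (s j) * ip n (f j) (f j)"
        unfolding ip_def using fev that by (simp add: sum_distrib_left mult_ac)
      then have "complex_of_real (s j) = ip n (mv n S (f j)) (f j)" using ff by simp
      also have "\<dots> = (\<Sum>y<R. complex_of_real (q y) * ip n (mv n (\<rho> y) (f j)) (f j))"
        by (rule ip_mv_comb[OF Sdef])
      also have "\<dots> = (\<Sum>y<R. complex_of_real (q y) * complex_of_real (\<Sum>i<n. L y i * P y i j))"
      proof (rule sum.cong[OF refl])
        fix y assume y: "y \<in> {..<R}"
        have "P y i j = (cmod (ip n (f j) (A y i)))^2" for i
          unfolding P_def by (subst ip_conj) simp
        then show "complex_of_real (q y) * ip n (mv n (\<rho> y) (f j)) (f j) = complex_of_real (q y) * complex_of_real (\<Sum>i<n. L y i * P y i j)"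
          using ED[of y] y unfolding L_def A_def by simp
      qed
      also have "\<dots> = complex_of_real (\<Sum>y<R. q y * (\<Sum>i<n. L y i * P y i j))" by simp
      finally show ?thesis by (rule of_real_eq_iff[THEN iffD1])
    qed
  qed
  moreover have "(\<Sum>y<R. q y * vN_entropy (\<rho> y)) = (\<Sum>y<R. q y * (\<Sum>i<n. eta (L y i)))"
    using ED unfolding L_def by simp
  ultimately show ?thesis using Sent by simp
qed




lemma eta_sum_match:
  fixes T :: "nat \<Rightarrow> nat \<Rightarrow> real" and s t :: "nat \<Rightarrow> real"
  assumes row: "\<And>k. k < m \<Longrightarrow> (\<Sum>j<l. T k j) = s k"
    and col: "\<And>j. j < l \<Longrightarrow> (\<Sum>k<m. T k j) = t j"
    and match: "\<And>k j. k < m \<Longrightarrow> j < l \<Longrightarrow> T k j \<noteq> 0 \<Longrightarrow> s k = t j"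
  shows "(\<Sum>k<m. eta (s k)) = (\<Sum>j<l. eta (t j))"
proof -
  have "(\<Sum>k<m. eta (s k)) = (\<Sum>k<m. \<Sum>j<l. T k j * (- log 2 (s k)))"
    unfolding eta_def using row by (intro sum.cong refl) (subst sum_distrib_right[symmetric], simp)
  also have "\<dots> = (\<Sum>k<m. \<Sum>j<l. T k j * (- log 2 (t j)))"
    using match by (intro sum.cong refl) (metis lessThan_iff mult_eq_0_iff)
  also have "\<dots> = (\<Sum>j<l. \<Sum>k<m. T k j * (- log 2 (t j)))" by (rule sum.swap)
  also have "\<dots> = (\<Sum>j<l. eta (t j))"
    unfolding eta_def using col by (intro sum.cong refl) (subst sum_distrib_right[symmetric], simp)
  finally show ?thesis .
qed

lemma pure_equal:
  fixes W :: "nat \<Rightarrow> nat \<Rightarrow> complex"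
  assumes X: "X = mat m m (\<lambda>(a,a'). \<Sum>b<l. W a b * cnj (W a' b))"
    and Y: "Y = mat l l (\<lambda>(b,b'). \<Sum>a<m. W a b * cnj (W a b'))"
  shows "vN_entropy X = vN_entropy Y"
proof -
  have Xc: "X \<in> carrier_mat m m" and Yc: "Y \<in> carrier_mat l l" using X Y by auto
  have Xe: "X $$ (a,a') = (\<Sum>b<l. W a b * cnj (W a' b))" if "a < m" "a' < m" for a a' using X that by simp
  have Ye: "Y $$ (b,b') = (\<Sum>a<m. W a b * cnj (W a b'))" if "b < l" "b' < l" for b b' using Y that by simp
  have Xh: "herm m X" unfolding herm_def using Xe by (simp add: mult.commute)
  have Yh: "herm l Y" unfolding herm_def using Ye by (simp add: mult.commute)
  obtain e s where e: "onb m e" and eev: "\<forall>k<m. \<forall>a<m. mv m X (e k) a = complex_of_real (s k) * e k a"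
    and Xent: "vN_entropy X = (\<Sum>k<m. eta (s k))" using spec_full[OF Xc Xh] by blast
  obtain g t where g: "onb l g" and gev: "\<forall>j<l. \<forall>b<l. mv l Y (g j) b = complex_of_real (t j) * g j b"
    and Yent: "vN_entropy Y = (\<Sum>j<l. eta (t j))" using spec_full[OF Yc Yh] by blast
  define r where "r j a = (\<Sum>b<l. W a b * cnj (g j b))" for j a
  define u where "u k b = (\<Sum>a<m. W a b * cnj (e k a))" for k b
  define z where "z k j = ip m (r j) (e k)" for k j
  have zu: "z k j = ip l (u k) (g j)" for k j
  proof -
    have "z k j = (\<Sum>a<m. \<Sum>b<l. W a b * cnj (g j b) * cnj (e k a))"
      unfolding z_def ip_def r_def by (simp add: sum_distrib_right)
    also have "\<dots> = (\<Sum>b<l. \<Sum>a<m. W a b * cnj (g j b) * cnj (e k a))" by (rule sum.swap)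
    also have "\<dots> = ip l (u k) (g j)" unfolding ip_def u_def by (simp add: sum_distrib_right sum_distrib_left mult_ac)
    finally show ?thesis .
  qed
  have ee: "ip m (e k) (e k) = 1" if "k < m" for k using e that unfolding onb_ortho ortho_def by auto
  have gg: "ip l (g j) (g j) = 1" if "j < l" for j using g that unfolding onb_ortho ortho_def by auto
  have rev: "mv m X (r j) a = complex_of_real (t j) * r j a" if j: "j < l" and a: "a < m" for j a
  proof -
    have "mv m X (r j) a = (\<Sum>a'<m. (\<Sum>c<l. W a c * cnj (W a' c)) * (\<Sum>b<l. W a' b * cnj (g j b)))"
      unfolding mv_def r_def using Xe a by simp
    also have "\<dots> = (\<Sum>a'<m. \<Sum>c<l. \<Sum>b<l. W a c * (cnj (W a' c) * W a' b * cnj (g j b)))"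
      by (simp add: sum_distrib_left sum_distrib_right mult_ac)
    also have "\<dots> = (\<Sum>c<l. \<Sum>b<l. \<Sum>a'<m. W a c * (cnj (W a' c) * W a' b * cnj (g j b)))"
      by (rule sum_swap3[where f = "\<lambda>c b a'. W a c * (cnj (W a' c) * W a' b * cnj (g j b))", symmetric])
    also have "\<dots> = (\<Sum>c<l. W a c * cnj (\<Sum>b<l. Y $$ (c,b) * g j b))"
    proof (rule sum.cong[OF refl])
      fix c assume c: "c \<in> {..<l}"
      have "(\<Sum>b<l. \<Sum>a'<m. W a c * (cnj (W a' c) * W a' b * cnj (g j b))) = W a c * (\<Sum>b<l. cnj (\<Sum>a'<m. W a' c * cnj (W a' b)) * cnj (g j b))"
        by (simp add: sum_distrib_left sum_distrib_right mult_ac)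
      also have "\<dots> = W a c * cnj (\<Sum>b<l. Y $$ (c,b) * g j b)"
        using Ye c by simp
      finally show "(\<Sum>b<l. \<Sum>a'<m. W a c * (cnj (W a' c) * W a' b * cnj (g j b))) = W a c * cnj (\<Sum>b<l. Y $$ (c,b) * g j b)" .
    qed
    also have "\<dots> = (\<Sum>c<l. W a c * cnj (complex_of_real (t j) * g j c))"
      using gev j unfolding mv_def by (intro sum.cong) auto
    also have "\<dots> = complex_of_real (t j) * r j a" unfolding r_def by (simp add: sum_distrib_left mult_ac)
    finally show ?thesis .
  qed
  have match: "s k = t j" if "k < m" "j < l" "z k j \<noteq> 0" for k j
  proof -
    have "ip m (mv m X (r j)) (e k) = complex_of_real (t j) * z k j"
      unfolding z_def ip_def using rev that by (simp add: sum_distrib_left mult_ac)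
    moreover have "ip m (r j) (mv m X (e k)) = complex_of_real (s k) * z k j"
      unfolding z_def ip_def using eev that by (simp add: sum_distrib_left mult_ac)
    ultimately have "complex_of_real (t j) * z k j = complex_of_real (s k) * z k j"
      using ip_herm[OF Xh] by metis
    then show ?thesis using that(3) by simp
  qed
  have col: "(\<Sum>k<m. (cmod (z k j))^2) = t j" if j: "j < l" for j
  proof -
    have "complex_of_real (\<Sum>k<m. (cmod (z k j))^2) = ip m (r j) (r j)"
      unfolding z_def by (rule parseval[OF e])
    also have "\<dots> = (\<Sum>a<m. (\<Sum>b<l. W a b * cnj (g j b)) * cnj (r j a))"
      unfolding ip_def by (rule sum.cong) (simp_all add: r_def)
    also have "\<dots> = (\<Sum>b<l. cnj (g j b) * (\<Sum>a<m. W a b * cnj (r j a)))"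
      by (simp add: sum_distrib_left sum_distrib_right mult_ac) (rule sum.swap)
    also have "\<dots> = (\<Sum>b<l. cnj (g j b) * (\<Sum>c<l. Y $$ (b,c) * g j c))"
    proof (rule sum.cong[OF refl])
      fix b assume b: "b \<in> {..<l}"
      have "(\<Sum>a<m. W a b * cnj (r j a)) = (\<Sum>a<m. \<Sum>c<l. W a b * cnj (W a c) * g j c)"
        unfolding r_def by (simp add: sum_distrib_left mult_ac)
      also have "\<dots> = (\<Sum>c<l. \<Sum>a<m. W a b * cnj (W a c) * g j c)" by (rule sum.swap)
      also have "\<dots> = (\<Sum>c<l. Y $$ (b,c) * g j c)" using Ye b by (simp add: sum_distrib_right)
      finally show "cnj (g j b) * (\<Sum>a<m. W a b * cnj (r j a)) = cnj (g j b) * (\<Sum>c<l. Y $$ (b,c) * g j c)" by simp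
    qed
    also have "\<dots> = (\<Sum>b<l. cnj (g j b) * (complex_of_real (t j) * g j b))"
      using gev j unfolding mv_def by (intro sum.cong) auto
    also have "\<dots> = complex_of_real (t j) * ip l (g j) (g j)"
      unfolding ip_def by (simp add: sum_distrib_left mult_ac)
    finally show ?thesis using gg[OF j] by (metis mult.right_neutral of_real_eq_iff)
  qed
  have row: "(\<Sum>j<l. (cmod (z k j))^2) = s k" if k: "k < m" for k
  proof -
    have "complex_of_real (\<Sum>j<l. (cmod (z k j))^2) = ip l (u k) (u k)"
      unfolding zu by (rule parseval[OF g])
    also have "\<dots> = (\<Sum>b<l. (\<Sum>a<m. W a b * cnj (e k a)) * cnj (u k b))"
      unfolding ip_def by (rule sum.cong) (simp_all add: u_def)
    also have "\<dots> = (\<Sum>a<m. cnj (e k a) * (\<Sum>b<l. W a b * cnj (u k b)))"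
      by (simp add: sum_distrib_left sum_distrib_right mult_ac) (rule sum.swap)
    also have "\<dots> = (\<Sum>a<m. cnj (e k a) * (\<Sum>c<m. X $$ (a,c) * e k c))"
    proof (rule sum.cong[OF refl])
      fix a assume a: "a \<in> {..<m}"
      have "(\<Sum>b<l. W a b * cnj (u k b)) = (\<Sum>b<l. \<Sum>c<m. W a b * cnj (W c b) * e k c)"
        unfolding u_def by (simp add: sum_distrib_left mult_ac)
      also have "\<dots> = (\<Sum>c<m. \<Sum>b<l. W a b * cnj (W c b) * e k c)" by (rule sum.swap)
      also have "\<dots> = (\<Sum>c<m. X $$ (a,c) * e k c)" using Xe a by (simp add: sum_distrib_right)
      finally show "cnj (e k a) * (\<Sum>b<l. W a b * cnj (u k b)) = cnj (e k a) * (\<Sum>c<m. X $$ (a,c) * e k c)" by simp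
    qed
    also have "\<dots> = (\<Sum>a<m. cnj (e k a) * (complex_of_real (s k) * e k a))"
      using eev k unfolding mv_def by (intro sum.cong) auto
    also have "\<dots> = complex_of_real (s k) * ip m (e k) (e k)"
      unfolding ip_def by (simp add: sum_distrib_left mult_ac)
    finally show ?thesis using ee[OF k] by (metis mult.right_neutral of_real_eq_iff)
  qed
  have "(\<Sum>k<m. eta (s k)) = (\<Sum>j<l. eta (t j))"
    by (rule eta_sum_match[where T = "\<lambda>k j. (cmod (z k j))^2"]) (use row col match in auto)
  then show ?thesis using Xent Yent by simp
qed




lemma sum_split_gen: "(\<Sum>k<m+e. (f::nat \<Rightarrow> 'a::comm_monoid_add) k) = (\<Sum>k<m. f k) + (\<Sum>i<e. f (m+i))"
  by (induction e) (simp_all add: add.assoc)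

lemma sum_prod_index: "(\<Sum>j<n*d. (f::nat \<Rightarrow> 'a::comm_monoid_add) j) = (\<Sum>a<n. \<Sum>c<d. f (a*d + c))"
proof (induction n)
  case 0
  then show ?case by simp
next
  case (Suc n)
  have "(\<Sum>j<Suc n * d. f j) = (\<Sum>j<n*d + d. f j)" by (simp add: add.commute)
  also have "\<dots> = (\<Sum>j<n*d. f j) + (\<Sum>c<d. f (n*d + c))" by (rule sum_split_gen)
  finally show ?case using Suc by simp
qed

lemma eta_mult: "p \<ge> 0 \<Longrightarrow> l \<ge> 0 \<Longrightarrow> eta (p * l) = l * eta p + p * eta l"
proof -
  assume p: "p \<ge> 0" and l: "l \<ge> 0"
  show ?thesis
  proof (cases "p = 0 \<or> l = 0")
    case True
    then show ?thesis unfolding eta_def by auto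
  next
    case False
    then have "p > 0" "l > 0" using p l by auto
    then show ?thesis unfolding eta_def by (simp add: log_mult algebra_simps)
  qed
qed

lemma sum_if_both:
  assumes "(u::nat) < N"
  shows "(\<Sum>x<N. if x = u \<and> x = v then G x else 0) = (if u = v then G u else (0::'a::comm_monoid_add))"
proof (cases "u = v")
  case True
  have "(\<Sum>x<N. if x = u \<and> x = v then G x else 0) = (\<Sum>x<N. if x = u then G x else 0)"
    using True by (intro sum.cong) auto
  also have "\<dots> = G u" using assms by (simp add: sum.delta)
  finally show ?thesis using True by simp
next
  case False
  then show ?thesis by (intro trans[OF sum.neutral]) auto
qed

lemma blockdiag_entropy:
  fixes p :: "nat \<Rightarrow> real" and M :: "nat \<Rightarrow> complex mat"
  assumes Z: "Z \<in> carrier_mat (nX*d) (nX*d)"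
    and Ze: "\<And>i j. i < nX*d \<Longrightarrow> j < nX*d \<Longrightarrow> Z $$ (i,j) =
       (if i div d = j div d then complex_of_real (p (i div d)) * M (i div d) $$ (i mod d, j mod d) else 0)"
    and M: "\<And>x. x < nX \<Longrightarrow> M x \<in> carrier_mat d d \<and> herm d (M x) \<and> psd d (M x) \<and> tr d (M x) = 1"
    and p: "\<And>x. x < nX \<Longrightarrow> p x \<ge> 0"
  shows "vN_entropy Z = (\<Sum>x<nX. eta (p x)) + (\<Sum>x<nX. p x * vN_entropy (M x))"
proof -
  have "\<forall>x\<in>{..<nX}. \<exists>ed. onb d (fst ed)
     \<and> (\<forall>a<d. \<forall>b<d. M x $$ (a,b) = (\<Sum>k<d. complex_of_real (snd ed k) * fst ed k a * cnj (fst ed k b)))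
     \<and> vN_entropy (M x) = (\<Sum>k<d. eta (snd ed k)) \<and> (\<Sum>k<d. snd ed k) = 1 \<and> (\<forall>k<d. snd ed k \<ge> 0)"
  proof
    fix x assume x: "x \<in> {..<nX}"
    have Mx: "M x \<in> carrier_mat d d" "herm d (M x)" using M x by auto
    obtain e l where H: "onb d e \<and> (\<forall>k<d. \<forall>a<d. mv d (M x) (e k) a = complex_of_real (l k) * e k a)
     \<and> (\<forall>a<d. \<forall>b<d. M x $$ (a,b) = (\<Sum>k<d. complex_of_real (l k) * e k a * cnj (e k b)))
     \<and> vN_entropy (M x) = (\<Sum>k<d. eta (l k))
     \<and> tr d (M x) = complex_of_real (\<Sum>k<d. l k)
     \<and> (\<forall>z. ip d (mv d (M x) z) z = complex_of_real (\<Sum>k<d. l k * (cmod (ip d z (e k)))^2))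
     \<and> (psd d (M x) \<longrightarrow> (\<forall>k<d. l k \<ge> 0))" using spec_full[OF Mx] by blast
    have "(\<Sum>k<d. l k) = 1" using H M x by (metis lessThan_iff of_real_eq_1_iff)
    then show "\<exists>ed. onb d (fst ed)
     \<and> (\<forall>a<d. \<forall>b<d. M x $$ (a,b) = (\<Sum>k<d. complex_of_real (snd ed k) * fst ed k a * cnj (fst ed k b)))
     \<and> vN_entropy (M x) = (\<Sum>k<d. eta (snd ed k)) \<and> (\<Sum>k<d. snd ed k) = 1 \<and> (\<forall>k<d. snd ed k \<ge> 0)"
      using H M x by (intro exI[of _ "(e,l)"]) auto
  qed
  from bchoice[OF this] obtain ED where EDb: "\<forall>x\<in>{..<nX}. onb d (fst (ED x))
     \<and> (\<forall>a<d. \<forall>b<d. M x $$ (a,b) = (\<Sum>k<d. complex_of_real (snd (ED x) k) * fst (ED x) k a * cnj (fst (ED x) k b)))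
     \<and> vN_entropy (M x) = (\<Sum>k<d. eta (snd (ED x) k)) \<and> (\<Sum>k<d. snd (ED x) k) = 1 \<and> (\<forall>k<d. snd (ED x) k \<ge> 0)" by blast
  define E where "E x = fst (ED x)" for x
  define L where "L x = snd (ED x)" for x
  have E: "onb d (E x)" and Mdec: "\<And>a b. a < d \<Longrightarrow> b < d \<Longrightarrow> M x $$ (a,b) = (\<Sum>k<d. complex_of_real (L x k) * E x k a * cnj (E x k b))"
    and Ment: "vN_entropy (M x) = (\<Sum>k<d. eta (L x k))" and L1: "(\<Sum>k<d. L x k) = 1" and L0: "\<And>k. k < d \<Longrightarrow> L x k \<ge> 0"
    if "x < nX" for x using EDb that unfolding E_def L_def by auto
  define F where "F K i = (if i div d = K div d then E (K div d) (K mod d) (i mod d) else 0)" for K i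
  define w where "w K = p (K div d) * L (K div d) (K mod d)" for K
  have Fpt: "F I (x*d+c) = (if x = I div d then E x (I mod d) c else 0)" if "c < d" for I x c
    unfolding F_def using that by auto
  have Fpt2: "F (x*d+k) i = (if i div d = x then E x k (i mod d) else 0)" if "k < d" for i x k
    unfolding F_def using that by auto
  have wpt: "w (x*d+k) = p x * L x k" if "k < d" for x k
    unfolding w_def using that by auto
  have Fo: "onb (nX*d) F"
    unfolding onb_def
  proof (intro allI impI)
    fix I J assume I: "I < nX*d" and J: "J < nX*d"
    have dp: "d > 0" using I by (cases d) auto
    have Ix: "I div d < nX" using I by (simp add: less_mult_imp_div_less)
    have "(\<Sum>a<nX*d. F I a * cnj (F J a)) = (\<Sum>x<nX. \<Sum>c<d. F I (x*d+c) * cnj (F J (x*d+c)))"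
      by (rule sum_prod_index)
    also have "\<dots> = (\<Sum>x<nX. if x = I div d \<and> x = J div d then (\<Sum>c<d. E x (I mod d) c * cnj (E x (J mod d) c)) else 0)"
      by (intro sum.cong refl) (auto simp: Fpt intro!: sum.neutral)
    also have "\<dots> = (if I div d = J div d then (\<Sum>c<d. E (I div d) (I mod d) c * cnj (E (I div d) (J mod d) c)) else 0)"
      by (rule sum_if_both[OF Ix])
    also have "\<dots> = (if I = J then 1 else 0)"
    proof (cases "I div d = J div d")
      case True
      have "(\<Sum>c<d. E (I div d) (I mod d) c * cnj (E (I div d) (J mod d) c)) = (if I mod d = J mod d then 1 else 0)"
        using E[OF Ix] dp unfolding onb_def by auto
      moreover have "I = J \<longleftrightarrow> I mod d = J mod d" using True by (metis div_mult_mod_eq)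
      ultimately show ?thesis using True by simp
    next
      case False
      then show ?thesis by auto
    qed
    finally show "(\<Sum>a<nX*d. F I a * cnj (F J a)) = (if I = J then 1 else 0)" .
  qed
  have Zdec: "Z $$ (i,j) = (\<Sum>K<nX*d. complex_of_real (w K) * F K i * cnj (F K j))" if i: "i < nX*d" and j: "j < nX*d" for i j
  proof -
    have ix: "i div d < nX" using i by (simp add: less_mult_imp_div_less)
    have dp: "d > 0" using i by (cases d) auto
    have "(\<Sum>K<nX*d. complex_of_real (w K) * F K i * cnj (F K j))
        = (\<Sum>x<nX. \<Sum>k<d. complex_of_real (w (x*d+k)) * F (x*d+k) i * cnj (F (x*d+k) j))"
      by (rule sum_prod_index)
    also have "\<dots> = (\<Sum>x<nX. if x = i div d \<and> x = j div d then (\<Sum>k<d. complex_of_real (p x * L x k) * E x k (i mod d) * cnj (E x k (j mod d))) else 0)"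
      using dp by (intro sum.cong refl) (auto simp: Fpt2 wpt intro!: sum.neutral)
    also have "\<dots> = (if i div d = j div d then (\<Sum>k<d. complex_of_real (p (i div d) * L (i div d) k) * E (i div d) k (i mod d) * cnj (E (i div d) k (j mod d))) else 0)"
      by (rule sum_if_both[OF ix])
    also have "\<dots> = Z $$ (i,j)"
      using Ze[OF i j] Mdec[OF ix, of "i mod d" "j mod d"] dp by (cases "i div d = j div d") (simp_all add: sum_distrib_left mult_ac del: div_mult_self1 div_mult_self2)
    finally show ?thesis by simp
  qed
  have "vN_entropy Z = (\<Sum>K<nX*d. eta (w K))" by (rule entropy_decomp[OF Z Fo]) (use Zdec in auto)
  also have "\<dots> = (\<Sum>x<nX. \<Sum>k<d. eta (p x * L x k))"
    unfolding w_def by (subst sum_prod_index) (auto intro!: sum.cong)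
  also have "\<dots> = (\<Sum>x<nX. eta (p x) + p x * vN_entropy (M x))"
  proof (rule sum.cong[OF refl])
    fix x assume x: "x \<in> {..<nX}"
    have "(\<Sum>k<d. eta (p x * L x k)) = (\<Sum>k<d. L x k * eta (p x) + p x * eta (L x k))"
      using p L0 x by (intro sum.cong refl eta_mult) auto
    also have "\<dots> = eta (p x) + p x * vN_entropy (M x)"
      using L1 Ment x by (simp add: sum.distrib sum_distrib_left[symmetric] sum_distrib_right[symmetric])
    finally show "(\<Sum>k<d. eta (p x * L x k)) = eta (p x) + p x * vN_entropy (M x)" .
  qed
  also have "\<dots> = (\<Sum>x<nX. eta (p x)) + (\<Sum>x<nX. p x * vN_entropy (M x))" by (rule sum.distrib)
  finally show ?thesis .
qed




lemma gram_props:
  fixes G :: "nat \<Rightarrow> nat \<Rightarrow> complex"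
  assumes M: "M = mat n n (\<lambda>(i,j). \<Sum>k<K. G k i * cnj (G k j))"
  shows "M \<in> carrier_mat n n \<and> herm n M \<and> psd n M \<and> tr n M = (\<Sum>k<K. \<Sum>i<n. G k i * cnj (G k i))"
proof -
  have Me: "M $$ (i,j) = (\<Sum>k<K. G k i * cnj (G k j))" if "i < n" "j < n" for i j using M that by simp
  have herm: "herm n M" unfolding herm_def using Me by (simp add: mult.commute)
  have psd: "psd n M" unfolding psd_def
  proof
    fix x
    define h where "h k = (\<Sum>j<n. cnj (G k j) * x j)" for k
    have "ip n (mv n M x) x = (\<Sum>i<n. (\<Sum>j<n. M $$ (i,j) * x j) * cnj (x i))" unfolding ip_def mv_def ..
    also have "\<dots> = (\<Sum>i<n. \<Sum>j<n. \<Sum>k<K. G k i * cnj (x i) * (cnj (G k j) * x j))"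
      using Me by (simp add: sum_distrib_right sum_distrib_left mult_ac)
    also have "\<dots> = (\<Sum>k<K. \<Sum>i<n. \<Sum>j<n. G k i * cnj (x i) * (cnj (G k j) * x j))"
      by (rule sum_swap3)
    also have "\<dots> = (\<Sum>k<K. cnj (h k) * h k)"
      unfolding h_def by (simp add: sum_distrib_left sum_distrib_right mult_ac)
    also have "\<dots> = complex_of_real (\<Sum>k<K. (cmod (h k))^2)"
      unfolding of_real_sum by (intro sum.cong) (simp_all, metis complex_norm_square of_real_power mult.commute)
    finally show "0 \<le> Re (ip n (mv n M x) x)" by (simp add: sum_nonneg)
  qed
  have "tr n M = (\<Sum>i<n. \<Sum>k<K. G k i * cnj (G k i))" unfolding tr_def using Me by simp
  also have "\<dots> = (\<Sum>k<K. \<Sum>i<n. G k i * cnj (G k i))" by (rule sum.swap)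
  finally show ?thesis using herm psd M by simp
qed

lemma idx_bound: "(a::nat) < n \<Longrightarrow> r < m \<Longrightarrow> a*m + r < n*m"
proof -
  assume a: "a < n" and r: "r < m"
  have "a*m + r < a*m + m" using r by simp
  also have "\<dots> = (a+1)*m" by simp
  also have "\<dots> \<le> n*m" using a by (intro mult_right_mono) auto
  finally show ?thesis .
qed

lemma idx_div: "r < (m::nat) \<Longrightarrow> (a*m + r) div m = a"
  by simp

lemma idx_mod: "r < (m::nat) \<Longrightarrow> (a*m + r) mod m = r"
  by simp




lemma kron_entry:
  "i < dim_row A * dim_row B \<Longrightarrow> j < dim_col A * dim_col B \<Longrightarrow>
   kron A B $$ (i,j) = A $$ (i div dim_row B, j div dim_col B) * B $$ (i mod dim_row B, j mod dim_col B)"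
  unfolding kron_def by simp

lemma kron_dims: "dim_row (kron A B) = dim_row A * dim_row B" "dim_col (kron A B) = dim_col A * dim_col B"
  unfolding kron_def by simp_all

lemma outer_entry: "i < dim_vec v \<Longrightarrow> j < dim_vec v \<Longrightarrow> outer v $$ (i,j) = v $ i * cnj (v $ j)"
  unfolding outer_def by simp

lemma outer_dims: "dim_row (outer v) = dim_vec v" "dim_col (outer v) = dim_vec v"
  unfolding outer_def by simp_all

lemma proj_entry: "i < n \<Longrightarrow> j < n \<Longrightarrow> proj n x $$ (i,j) = (if i = x \<and> j = x then 1 else 0)"
  unfolding proj_def by simp

lemma proj_dims: "dim_row (proj n x) = n" "dim_col (proj n x) = n"
  unfolding proj_def by simp_all

locale cqs =
  fixes dAp dB dE :: nat and V :: "complex mat" and nX dA :: nat and p :: "nat \<Rightarrow> real" and \<psi> :: "nat \<Rightarrow> complex vec"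
  assumes V: "V \<in> carrier_mat (dB*dE) dAp" and iso: "adj V * V = 1\<^sub>m dAp"
    and psi: "\<And>x. x < nX \<Longrightarrow> \<psi> x \<in> carrier_vec (dA*dAp) \<and> \<psi> x \<bullet>c \<psi> x = 1"
    and p0: "\<And>x. x < nX \<Longrightarrow> p x \<ge> 0" and p1: "(\<Sum>x<nX. p x) = 1"
begin

definition w :: "nat \<Rightarrow> nat \<Rightarrow> nat \<Rightarrow> nat \<Rightarrow> complex" where
  "w x a b e = (\<Sum>c<dAp. V $$ (b*dE+e, c) * \<psi> x $ (a*dAp + c))"

definition beta :: "nat \<Rightarrow> complex mat" where
  "beta x = mat dB dB (\<lambda>(b,b'). \<Sum>a<dA. \<Sum>e<dE. w x a b e * cnj (w x a b' e))"

definition tau :: "nat \<Rightarrow> complex mat" where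
  "tau x = mat (dA*dB) (dA*dB) (\<lambda>(s,s'). \<Sum>e<dE. w x (s div dB) (s mod dB) e * cnj (w x (s' div dB) (s' mod dB) e))"

lemma kron_vec:
  assumes x: "x < nX" and a: "a < dA" and r: "r < dB*dE"
  shows "(kron (1\<^sub>m dA) V *\<^sub>v \<psi> x) $ (a*(dB*dE) + r) = (\<Sum>c<dAp. V $$ (r, c) * \<psi> x $ (a*dAp + c))"
proof -
  have px: "dim_vec (\<psi> x) = dA*dAp" using psi[OF x] by auto
  have dims: "dim_row V = dB*dE" "dim_col V = dAp" using V by auto
  have i: "a*(dB*dE) + r < dA*(dB*dE)" using idx_bound[OF a r] .
  have "(kron (1\<^sub>m dA) V *\<^sub>v \<psi> x) $ (a*(dB*dE) + r) = (\<Sum>j<dA*dAp. kron (1\<^sub>m dA) V $$ (a*(dB*dE) + r, j) * \<psi> x $ j)"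
    using i px dims unfolding kron_def by (simp add: scalar_prod_def atLeast0LessThan)
  also have "\<dots> = (\<Sum>a'<dA. \<Sum>c<dAp. kron (1\<^sub>m dA) V $$ (a*(dB*dE) + r, a'*dAp + c) * \<psi> x $ (a'*dAp + c))"
    by (rule sum_prod_index)
  also have "\<dots> = (\<Sum>a'<dA. \<Sum>c<dAp. (if a = a' then V $$ (r, c) * \<psi> x $ (a'*dAp + c) else 0))"
  proof (intro sum.cong refl)
    fix a' c assume a': "a' \<in> {..<dA}" and c: "c \<in> {..<dAp}"
    have j: "a'*dAp + c < dA*dAp" using idx_bound a' c by auto
    have "kron (1\<^sub>m dA) V $$ (a*(dB*dE) + r, a'*dAp + c) = 1\<^sub>m dA $$ (a, a') * V $$ (r, c)"
      using i j a a' c r dims by (subst kron_entry) (simp_all add: idx_div idx_mod)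
    then show "kron (1\<^sub>m dA) V $$ (a*(dB*dE) + r, a'*dAp + c) * \<psi> x $ (a'*dAp + c) = (if a = a' then V $$ (r, c) * \<psi> x $ (a'*dAp + c) else 0)"
      using a a' by simp
  qed
  also have "\<dots> = (\<Sum>c<dAp. V $$ (r, c) * \<psi> x $ (a*dAp + c))"
    using a by (subst sum.swap) (simp add: sum.delta')
  finally show ?thesis .
qed

lemma dimV: "dim_row V = dB*dE" using V by auto

definition rho where "rho = cq_state nX dA V p \<psi>"

lemma rho_dim: "rho \<in> carrier_mat (nX*(dA*(dB*dE))) (nX*(dA*(dB*dE)))"
  unfolding rho_def cq_state_def Let_def dimV by simp

lemma rho_entry:
  assumes x: "x < nX" "x' < nX" and a: "a < dA" "a' < dA" and r: "r < dB*dE" "r' < dB*dE"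
  shows "rho $$ (x*(dA*(dB*dE)) + (a*(dB*dE) + r), x'*(dA*(dB*dE)) + (a'*(dB*dE) + r'))
     = (if x = x' then complex_of_real (p x) * (kron (1\<^sub>m dA) V *\<^sub>v \<psi> x) $ (a*(dB*dE) + r)
            * cnj ((kron (1\<^sub>m dA) V *\<^sub>v \<psi> x) $ (a'*(dB*dE) + r')) else 0)"
proof -
  let ?L = "dA*(dB*dE)"
  have i: "a*(dB*dE) + r < ?L" "a'*(dB*dE) + r' < ?L" using idx_bound a r by auto
  have I: "x*?L + (a*(dB*dE) + r) < nX*?L" "x'*?L + (a'*(dB*dE) + r') < nX*?L" using idx_bound x i by auto
  have dv: "dim_vec (kron (1\<^sub>m dA) V *\<^sub>v \<psi> y) = ?L" for y unfolding kron_def dimV by simp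
  have "rho $$ (x*?L + (a*(dB*dE) + r), x'*?L + (a'*(dB*dE) + r'))
      = (\<Sum>y<nX. complex_of_real (p y) * kron (proj nX y) (outer (kron (1\<^sub>m dA) V *\<^sub>v \<psi> y)) $$ (x*?L + (a*(dB*dE) + r), x'*?L + (a'*(dB*dE) + r')))"
    using I unfolding rho_def cq_state_def Let_def dimV by simp
  also have "\<dots> = (\<Sum>y<nX. if y = x then (if x = x' then complex_of_real (p x) * (kron (1\<^sub>m dA) V *\<^sub>v \<psi> x) $ (a*(dB*dE) + r)
            * cnj ((kron (1\<^sub>m dA) V *\<^sub>v \<psi> x) $ (a'*(dB*dE) + r')) else 0) else 0)"
  proof (intro sum.cong refl)
    fix y assume y: "y \<in> {..<nX}"
    show "complex_of_real (p y) * kron (proj nX y) (outer (kron (1\<^sub>m dA) V *\<^sub>v \<psi> y)) $$ (x*?L + (a*(dB*dE) + r), x'*?L + (a'*(dB*dE) + r'))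
      = (if y = x then (if x = x' then complex_of_real (p x) * (kron (1\<^sub>m dA) V *\<^sub>v \<psi> x) $ (a*(dB*dE) + r)
            * cnj ((kron (1\<^sub>m dA) V *\<^sub>v \<psi> x) $ (a'*(dB*dE) + r')) else 0) else 0)"
    proof -
      have "kron (proj nX y) (outer (kron (1\<^sub>m dA) V *\<^sub>v \<psi> y)) $$ (x*?L + (a*(dB*dE) + r), x'*?L + (a'*(dB*dE) + r'))
        = proj nX y $$ (x, x') * outer (kron (1\<^sub>m dA) V *\<^sub>v \<psi> y) $$ (a*(dB*dE) + r, a'*(dB*dE) + r')"
        using I i by (subst kron_entry) (simp_all add: proj_dims outer_dims dv idx_div idx_mod kron_dims dimV)
      also have "\<dots> = (if x = y \<and> x' = y then 1 else 0) * ((kron (1\<^sub>m dA) V *\<^sub>v \<psi> y) $ (a*(dB*dE) + r) * cnj ((kron (1\<^sub>m dA) V *\<^sub>v \<psi> y) $ (a'*(dB*dE) + r')))"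
        using x i by (simp add: proj_entry outer_entry dv kron_dims dimV)
      finally show ?thesis by auto
    qed
  qed
  also have "\<dots> = (if x = x' then complex_of_real (p x) * (kron (1\<^sub>m dA) V *\<^sub>v \<psi> x) $ (a*(dB*dE) + r)
            * cnj ((kron (1\<^sub>m dA) V *\<^sub>v \<psi> x) $ (a'*(dB*dE) + r')) else 0)"
    using x by (simp add: sum.delta)
  finally show ?thesis .
qed

lemma w_eq:
  assumes "x < nX" "a < dA" "b < dB" "e < dE"
  shows "(kron (1\<^sub>m dA) V *\<^sub>v \<psi> x) $ (a*(dB*dE) + (b*dE + e)) = w x a b e"
proof -
  have "b*dE + e < dB*dE" using idx_bound assms by auto
  then show ?thesis using kron_vec assms unfolding w_def by auto
qed

definition sXAB where "sXAB = rho_XAB dB dE (nX, dA, rho)"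
definition sXB where "sXB = rho_XB dB dE (nX, dA, rho)"
definition sX where "sX = rho_X dB dE (nX, dA, rho)"
definition sB where "sB = rho_B dB dE (nX, dA, rho)"

lemma sXAB_dim: "sXAB \<in> carrier_mat (nX*(dA*dB)) (nX*(dA*dB))"
  unfolding sXAB_def rho_XAB_def ptrace2_def by (simp add: mult.assoc)

lemma sXAB_entry:
  assumes x: "x < nX" "x' < nX" and a: "a < dA" "a' < dA" and b: "b < dB" "b' < dB"
  shows "sXAB $$ ((x*dA+a)*dB+b, (x'*dA+a')*dB+b') =
    (if x = x' then complex_of_real (p x) * (\<Sum>e<dE. w x a b e * cnj (w x a' b' e)) else 0)"
proof -
  have i: "(x*dA+a)*dB+b < nX*dA*dB" "(x'*dA+a')*dB+b' < nX*dA*dB"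
    using idx_bound[OF idx_bound[OF x(1) a(1)] b(1)] idx_bound[OF idx_bound[OF x(2) a(2)] b(2)] by auto
  have idx: "((y*dA+c)*dB+d)*dE+e = y*(dA*(dB*dE)) + (c*(dB*dE) + (d*dE + e))" for y c d e
    by (simp add: algebra_simps)
  have "sXAB $$ ((x*dA+a)*dB+b, (x'*dA+a')*dB+b') = (\<Sum>e<dE. rho $$ (((x*dA+a)*dB+b)*dE+e, ((x'*dA+a')*dB+b')*dE+e))"
    using i unfolding sXAB_def rho_XAB_def ptrace2_def by simp
  also have "\<dots> = (\<Sum>e<dE. if x = x' then complex_of_real (p x) * (w x a b e * cnj (w x a' b' e)) else 0)"
  proof (intro sum.cong refl)
    fix e assume e: "e \<in> {..<dE}"
    have r: "b*dE + e < dB*dE" "b'*dE + e < dB*dE" using idx_bound b e by auto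
    show "rho $$ (((x*dA+a)*dB+b)*dE+e, ((x'*dA+a')*dB+b')*dE+e) = (if x = x' then complex_of_real (p x) * (w x a b e * cnj (w x a' b' e)) else 0)"
      unfolding idx using rho_entry[OF x a r] w_eq x a b e by auto
  qed
  also have "\<dots> = (if x = x' then complex_of_real (p x) * (\<Sum>e<dE. w x a b e * cnj (w x a' b' e)) else 0)"
    by (simp add: sum_distrib_left)
  finally show ?thesis .
qed

lemma sXB_dim: "sXB \<in> carrier_mat (nX*dB) (nX*dB)"
  unfolding sXB_def rho_XB_def ptrace_mid_def by simp

lemma sXB_entry:
  assumes x: "x < nX" "x' < nX" and b: "b < dB" "b' < dB"
  shows "sXB $$ (x*dB+b, x'*dB+b') = (if x = x' then complex_of_real (p x) * beta x $$ (b,b') else 0)"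
proof -
  have i: "x*dB+b < nX*dB" "x'*dB+b' < nX*dB" using idx_bound x b by auto
  have "sXB $$ (x*dB+b, x'*dB+b') = (\<Sum>a<dA. sXAB $$ ((x*dA+a)*dB+b, (x'*dA+a)*dB+b'))"
    using i b unfolding sXB_def rho_XB_def ptrace_mid_def sXAB_def[symmetric] by simp
  also have "\<dots> = (\<Sum>a<dA. if x = x' then complex_of_real (p x) * (\<Sum>e<dE. w x a b e * cnj (w x a b' e)) else 0)"
    using sXAB_entry x b by (intro sum.cong refl) auto
  also have "\<dots> = (if x = x' then complex_of_real (p x) * beta x $$ (b,b') else 0)"
    unfolding beta_def using b by (simp add: sum_distrib_left)
  finally show ?thesis .
qed

lemma beta_gram: "beta x = mat dB dB (\<lambda>(b,b'). \<Sum>k<dA*dE. w x (k div dE) b (k mod dE) * cnj (w x (k div dE) b' (k mod dE)))"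
  unfolding beta_def by (intro cong_mat refl) (auto simp: sum_prod_index)

lemma tau_gram: "tau x = mat (dA*dB) (dA*dB) (\<lambda>(s,s'). \<Sum>e<dE. (\<lambda>e s. w x (s div dB) (s mod dB) e) e s * cnj ((\<lambda>e s. w x (s div dB) (s mod dB) e) e s'))"
  unfolding tau_def by simp

lemma w_norm:
  assumes x: "x < nX" and a: "a < dA"
  shows "(\<Sum>b<dB. \<Sum>e<dE. w x a b e * cnj (w x a b e)) = (\<Sum>c<dAp. \<psi> x $ (a*dAp+c) * cnj (\<psi> x $ (a*dAp+c)))"
proof -
  define f where "f c = \<psi> x $ (a*dAp+c)" for c
  have isoe: "(\<Sum>r<dB*dE. cnj (V $$ (r,c')) * V $$ (r,c)) = (if c' = c then 1 else 0)" if "c < dAp" "c' < dAp" for c c'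
  proof -
    have "(adj V * V) $$ (c',c) = (\<Sum>r<dB*dE. cnj (V $$ (r,c')) * V $$ (r,c))"
      using V that unfolding adj_def by (auto simp: scalar_prod_def atLeast0LessThan)
    then show ?thesis using iso that by simp
  qed
  have "(\<Sum>b<dB. \<Sum>e<dE. w x a b e * cnj (w x a b e)) = (\<Sum>r<dB*dE. (\<Sum>c<dAp. V $$ (r,c) * f c) * cnj (\<Sum>c<dAp. V $$ (r,c) * f c))"
    unfolding w_def f_def by (subst sum_prod_index) simp
  also have "\<dots> = (\<Sum>r<dB*dE. \<Sum>c<dAp. \<Sum>c'<dAp. f c * cnj (f c') * (cnj (V $$ (r,c')) * V $$ (r,c)))"
    by (simp add: sum_distrib_left sum_distrib_right mult_ac) (rule sum.cong[OF refl], rule sum.swap)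
  also have "\<dots> = (\<Sum>c<dAp. \<Sum>c'<dAp. \<Sum>r<dB*dE. f c * cnj (f c') * (cnj (V $$ (r,c')) * V $$ (r,c)))"
    by (rule sum_swap3[symmetric])
  also have "\<dots> = (\<Sum>c<dAp. \<Sum>c'<dAp. f c * cnj (f c') * (if c' = c then 1 else 0))"
    using isoe by (simp add: sum_distrib_left[symmetric])
  also have "\<dots> = (\<Sum>c<dAp. f c * cnj (f c))"
    by (intro sum.cong refl) (simp add: if_distrib sum.delta cong: if_cong)
  finally show ?thesis unfolding f_def .
qed

lemma psi_norm:
  assumes x: "x < nX"
  shows "(\<Sum>a<dA. \<Sum>c<dAp. \<psi> x $ (a*dAp+c) * cnj (\<psi> x $ (a*dAp+c))) = 1"
proof -
  have "1 = \<psi> x \<bullet>c \<psi> x" using psi x by auto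
  also have "\<dots> = (\<Sum>j<dA*dAp. \<psi> x $ j * cnj (\<psi> x $ j))"
    using psi[OF x] by (auto simp: scalar_prod_def atLeast0LessThan)
  also have "\<dots> = (\<Sum>a<dA. \<Sum>c<dAp. \<psi> x $ (a*dAp+c) * cnj (\<psi> x $ (a*dAp+c)))" by (rule sum_prod_index)
  finally show ?thesis by simp
qed

lemma beta_props:
  assumes x: "x < nX"
  shows "beta x \<in> carrier_mat dB dB \<and> herm dB (beta x) \<and> psd dB (beta x) \<and> tr dB (beta x) = 1"
proof -
  have g: "beta x \<in> carrier_mat dB dB \<and> herm dB (beta x) \<and> psd dB (beta x) \<and> tr dB (beta x) =
     (\<Sum>k<dA*dE. \<Sum>b<dB. w x (k div dE) b (k mod dE) * cnj (w x (k div dE) b (k mod dE)))"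
    by (rule gram_props[OF beta_gram])
  have "(\<Sum>k<dA*dE. \<Sum>b<dB. w x (k div dE) b (k mod dE) * cnj (w x (k div dE) b (k mod dE)))
      = (\<Sum>a<dA. \<Sum>e<dE. \<Sum>b<dB. w x a b e * cnj (w x a b e))"
    by (subst sum_prod_index) simp
  also have "\<dots> = (\<Sum>a<dA. \<Sum>b<dB. \<Sum>e<dE. w x a b e * cnj (w x a b e))"
    by (intro sum.cong refl sum.swap)
  also have "\<dots> = 1" using w_norm psi_norm x by simp
  finally show ?thesis using g by simp
qed

lemma tau_props:
  assumes x: "x < nX"
  shows "tau x \<in> carrier_mat (dA*dB) (dA*dB) \<and> herm (dA*dB) (tau x) \<and> psd (dA*dB) (tau x) \<and> tr (dA*dB) (tau x) = 1"
proof -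
  have g: "tau x \<in> carrier_mat (dA*dB) (dA*dB) \<and> herm (dA*dB) (tau x) \<and> psd (dA*dB) (tau x) \<and> tr (dA*dB) (tau x) =
     (\<Sum>e<dE. \<Sum>s<dA*dB. w x (s div dB) (s mod dB) e * cnj (w x (s div dB) (s mod dB) e))"
    by (rule gram_props[OF tau_gram])
  have "(\<Sum>e<dE. \<Sum>s<dA*dB. w x (s div dB) (s mod dB) e * cnj (w x (s div dB) (s mod dB) e))
      = (\<Sum>e<dE. \<Sum>a<dA. \<Sum>b<dB. w x a b e * cnj (w x a b e))"
    by (subst sum_prod_index) simp
  also have "\<dots> = (\<Sum>a<dA. \<Sum>b<dB. \<Sum>e<dE. w x a b e * cnj (w x a b e))"
    by (rule sum_swap3[symmetric])
  also have "\<dots> = 1" using w_norm psi_norm x by simp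
  finally show ?thesis using g by simp
qed

end




lemma eta_bounds: "0 \<le> t \<Longrightarrow> t \<le> 1 \<Longrightarrow> 0 \<le> eta t \<and> eta t \<le> 2"
proof -
  assume t0: "0 \<le> t" and t1: "t \<le> 1"
  show ?thesis
  proof (cases "t = 0")
    case True then show ?thesis unfolding eta_def by simp
  next
    case False
    then have tp: "t > 0" using t0 by simp
    have "log 2 t \<le> 0" using tp t1 by simp
    then have nn: "0 \<le> eta t" unfolding eta_def using t0 by (simp add: mult_nonneg_nonpos)
    have "ln (1/t) \<le> 1/t - 1" using tp by (intro ln_le_minus_one) simp
    then have "- ln t \<le> 1/t - 1" using tp by (simp add: ln_div)
    then have "t * (- ln t) \<le> t * (1/t - 1)" using tp by (intro mult_left_mono) auto
    then have "- (t * ln t) \<le> 1 - t" using tp by (simp add: algebra_simps)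
    moreover have "ln 2 \<ge> (1::real)/2"
    proof -
      have "ln (1/2::real) \<le> 1/2 - 1" by (rule ln_le_minus_one) simp
      then show ?thesis by (simp add: ln_div)
    qed
    ultimately have "- (t * ln t) / ln 2 \<le> 2"
    proof -
      assume a1: "- (t * ln t) \<le> 1 - t" and a2: "ln 2 \<ge> (1::real)/2"
      have l2: "ln (2::real) > 0" by simp
      have "- (t * ln t) / ln 2 \<le> 1 / ln 2" using a1 t0 l2 by (intro divide_right_mono) auto
      also have "1 / ln 2 \<le> (2::real)" using a2 l2 by (simp add: divide_le_eq)
      finally show ?thesis .
    qed
    then show ?thesis using nn unfolding eta_def log_def by (simp add: field_simps)
  qed
qed

lemma entropy_bounds:
  assumes M: "M \<in> carrier_mat n n" "herm n M" "psd n M" "tr n M = 1"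
  shows "0 \<le> vN_entropy M \<and> vN_entropy M \<le> 2 * real n"
proof -
  obtain e d where H: "onb n e \<and> (\<forall>k<n. \<forall>a<n. mv n M (e k) a = complex_of_real (d k) * e k a)
     \<and> (\<forall>a<n. \<forall>b<n. M $$ (a,b) = (\<Sum>k<n. complex_of_real (d k) * e k a * cnj (e k b)))
     \<and> vN_entropy M = (\<Sum>k<n. eta (d k))
     \<and> tr n M = complex_of_real (\<Sum>k<n. d k)
     \<and> (\<forall>x. ip n (mv n M x) x = complex_of_real (\<Sum>k<n. d k * (cmod (ip n x (e k)))^2))
     \<and> (psd n M \<longrightarrow> (\<forall>k<n. d k \<ge> 0))" using spec_full[OF M(1,2)] by blast
  have d0: "\<forall>k<n. d k \<ge> 0" using H M by blast
  have d1: "(\<Sum>k<n. d k) = 1" using H M by (metis of_real_eq_1_iff)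
  have dle: "d k \<le> 1" if "k < n" for k
  proof -
    have "d k \<le> (\<Sum>k<n. d k)" using d0 that by (intro member_le_sum) auto
    then show ?thesis using d1 by simp
  qed
  have "0 \<le> (\<Sum>k<n. eta (d k))" using eta_bounds d0 dle by (intro sum_nonneg) auto
  moreover have "(\<Sum>k<n. eta (d k)) \<le> (\<Sum>k<n. 2)" using eta_bounds d0 dle by (intro sum_mono) auto
  ultimately show ?thesis using H by simp
qed

lemma delta2:
  assumes "(x::nat) < N" "x' < N"
  shows "(\<Sum>k<N. (c k::complex) * (if k = x then 1 else 0) * cnj (if k = x' then 1 else 0)) = (if x = x' then c x else 0)"
proof (cases "x = x'")
  case True
  have "(\<Sum>k<N. c k * (if k = x then 1 else 0) * cnj (if k = x' then 1 else 0)) = (\<Sum>k<N. if k = x then c k else 0)"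
    using True by (intro sum.cong) auto
  then show ?thesis using True assms by (simp add: sum.delta)
next
  case False
  then show ?thesis by (intro trans[OF sum.neutral]) auto
qed

context cqs begin

lemma sXB_general:
  assumes i: "i < nX*dB" and j: "j < nX*dB"
  shows "sXB $$ (i,j) = (if i div dB = j div dB then complex_of_real (p (i div dB)) * beta (i div dB) $$ (i mod dB, j mod dB) else 0)"
proof -
  have dB: "dB > 0" using i by (cases dB) auto
  have x: "i div dB < nX" "j div dB < nX" using i j by (simp_all add: less_mult_imp_div_less)
  have b: "i mod dB < dB" "j mod dB < dB" using dB by auto
  have "sXB $$ (i,j) = sXB $$ ((i div dB)*dB + i mod dB, (j div dB)*dB + j mod dB)" by simp
  then show ?thesis by (simp only: sXB_entry[OF x b])
qed

lemma sXAB_general: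
  assumes i: "i < nX*(dA*dB)" and j: "j < nX*(dA*dB)"
  shows "sXAB $$ (i,j) = (if i div (dA*dB) = j div (dA*dB) then complex_of_real (p (i div (dA*dB))) * tau (i div (dA*dB)) $$ (i mod (dA*dB), j mod (dA*dB)) else 0)"
proof -
  let ?m = "dA*dB"
  have m: "?m > 0" using i by (cases ?m) auto
  then have dB: "dB > 0" and dA: "dA > 0" by auto
  have x: "i div ?m < nX" "j div ?m < nX" using i j by (simp_all add: less_mult_imp_div_less)
  have s: "i mod ?m < ?m" "j mod ?m < ?m" using m by auto
  have a: "i mod ?m div dB < dA" "j mod ?m div dB < dA" using s by (simp_all add: less_mult_imp_div_less)
  have b: "i mod ?m mod dB < dB" "j mod ?m mod dB < dB" using dB by auto
  have ieq: "k = (k div ?m * dA + k mod ?m div dB) * dB + k mod ?m mod dB" for k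
  proof -
    have "(k div ?m * dA + k mod ?m div dB) * dB + k mod ?m mod dB = k div ?m * ?m + (k mod ?m div dB * dB + k mod ?m mod dB)"
      by (simp add: algebra_simps)
    also have "\<dots> = k" by (simp only: div_mult_mod_eq)
    finally show ?thesis by simp
  qed
  have "sXAB $$ (i,j) = sXAB $$ ((i div ?m * dA + i mod ?m div dB) * dB + i mod ?m mod dB, (j div ?m * dA + j mod ?m div dB) * dB + j mod ?m mod dB)"
    using ieq[of i] ieq[of j] by simp
  also have "\<dots> = (if i div ?m = j div ?m then complex_of_real (p (i div ?m)) * (\<Sum>e<dE. w (i div ?m) (i mod ?m div dB) (i mod ?m mod dB) e * cnj (w (i div ?m) (j mod ?m div dB) (j mod ?m mod dB) e)) else 0)"
    by (rule sXAB_entry[OF x a b])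
  also have "\<dots> = (if i div (dA*dB) = j div (dA*dB) then complex_of_real (p (i div (dA*dB))) * tau (i div (dA*dB)) $$ (i mod (dA*dB), j mod (dA*dB)) else 0)"
    unfolding tau_def using s by auto
  finally show ?thesis .
qed

lemma H_sXB: "vN_entropy sXB = (\<Sum>x<nX. eta (p x)) + (\<Sum>x<nX. p x * vN_entropy (beta x))"
  by (rule blockdiag_entropy[OF sXB_dim sXB_general beta_props p0])

lemma H_sXAB: "vN_entropy sXAB = (\<Sum>x<nX. eta (p x)) + (\<Sum>x<nX. p x * vN_entropy (tau x))"
  by (rule blockdiag_entropy[OF sXAB_dim sXAB_general tau_props p0])

lemma sX_entry:
  assumes "x < nX" "x' < nX"
  shows "sX $$ (x,x') = (\<Sum>k<nX. complex_of_real (p k) * (if k = x then 1 else 0) * cnj (if k = x' then 1 else 0))"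
proof -
  have "sX $$ (x,x') = (\<Sum>b<dB. sXB $$ (x*dB+b, x'*dB+b))"
    using assms unfolding sX_def rho_X_def ptrace2_def sXB_def[symmetric] by simp
  also have "\<dots> = (\<Sum>b<dB. if x = x' then complex_of_real (p x) * beta x $$ (b,b) else 0)"
    using sXB_entry assms by (intro sum.cong refl) auto
  also have "\<dots> = (if x = x' then complex_of_real (p x) * tr dB (beta x) else 0)"
    unfolding tr_def by (simp add: sum_distrib_left)
  also have "\<dots> = (if x = x' then complex_of_real (p x) else 0)" using beta_props assms by simp
  also have "\<dots> = (\<Sum>k<nX. complex_of_real (p k) * (if k = x then 1 else 0) * cnj (if k = x' then 1 else 0))"
    using delta2[OF assms] by simp
  finally show ?thesis .
qed

lemma H_sX: "vN_entropy sX = (\<Sum>x<nX. eta (p x))"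
proof -
  have c: "sX \<in> carrier_mat nX nX" unfolding sX_def rho_X_def ptrace2_def by simp
  have o: "onb nX (\<lambda>k a. if k = a then 1 else 0)" unfolding onb_def
  proof (intro allI impI)
    fix i j assume ij: "i < nX" "j < nX"
    show "(\<Sum>a<nX. (if i = a then 1 else 0) * cnj (if j = a then 1 else 0)) = (if i = j then 1 else (0::complex))"
    proof -
      have "(\<Sum>a<nX. (if i = a then 1 else 0) * cnj (if j = a then 1 else 0)) = (\<Sum>a<nX. if i = a then (if j = a then 1 else 0) else (0::complex))"
        by (intro sum.cong) auto
      also have "\<dots> = (if j = i then 1 else 0)" using ij by (simp add: sum.delta')
      finally show ?thesis by auto
    qed
  qed
  show ?thesis by (rule entropy_decomp[OF c o]) (use sX_entry in simp)
qed

lemma sB_entry: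
  assumes "b < dB" "b' < dB"
  shows "sB $$ (b,b') = (\<Sum>x<nX. complex_of_real (p x) * beta x $$ (b,b'))"
proof -
  have "sB $$ (b,b') = (\<Sum>x<nX. sXB $$ (x*dB+b, x*dB+b'))"
    using assms unfolding sB_def rho_B_def ptrace1_def sXB_def[symmetric] by simp
  also have "\<dots> = (\<Sum>x<nX. complex_of_real (p x) * beta x $$ (b,b'))"
    using sXB_entry assms by (intro sum.cong refl) auto
  finally show ?thesis .
qed

lemma sB_dim: "sB \<in> carrier_mat dB dB" unfolding sB_def rho_B_def ptrace1_def by simp

lemma sB_props: "herm dB sB \<and> psd dB sB \<and> tr dB sB = 1"
proof -
  have h: "herm dB sB" unfolding herm_def
  proof (intro allI impI)
    fix a b assume ab: "a < dB" "b < dB"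
    have hb: "beta x $$ (a,b) = cnj (beta x $$ (b,a))" if "x < nX" for x
      using beta_props[OF that] ab unfolding herm_def by (metis)
    have "sB $$ (a,b) = (\<Sum>x<nX. complex_of_real (p x) * beta x $$ (a,b))" using sB_entry ab by simp
    also have "\<dots> = (\<Sum>x<nX. complex_of_real (p x) * cnj (beta x $$ (b,a)))"
      by (rule sum.cong[OF refl]) (metis hb lessThan_iff)
    finally have "sB $$ (a,b) = (\<Sum>x<nX. complex_of_real (p x) * cnj (beta x $$ (b,a)))" .
    then show "sB $$ (a,b) = cnj (sB $$ (b,a))" using sB_entry ab by simp
  qed
  have psd: "psd dB sB" unfolding psd_def
  proof
    fix z
    have "ip dB (mv dB sB z) z = (\<Sum>x<nX. complex_of_real (p x) * ip dB (mv dB (beta x) z) z)"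
      by (rule ip_mv_comb) (use sB_entry in auto)
    then have "Re (ip dB (mv dB sB z) z) = (\<Sum>x<nX. p x * Re (ip dB (mv dB (beta x) z) z))" by simp
    also have "\<dots> \<ge> 0" using beta_props p0 unfolding psd_def by (intro sum_nonneg mult_nonneg_nonneg) auto
    finally show "0 \<le> Re (ip dB (mv dB sB z) z)" .
  qed
  have "tr dB sB = (\<Sum>b<dB. \<Sum>x<nX. complex_of_real (p x) * beta x $$ (b,b))" unfolding tr_def using sB_entry by simp
  also have "\<dots> = (\<Sum>x<nX. complex_of_real (p x) * tr dB (beta x))" unfolding tr_def by (subst sum.swap) (simp add: sum_distrib_left)
  also have "\<dots> = (\<Sum>x<nX. complex_of_real (p x))" using beta_props by simp
  also have "\<dots> = 1" using p1 by (metis of_real_1 of_real_sum)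
  finally show ?thesis using h psd by simp
qed

lemma mutual_formula: "mutual_XB dB dE (nX, dA, rho) = vN_entropy sB - (\<Sum>x<nX. p x * vN_entropy (beta x))"
  unfolding mutual_XB_def sX_def[symmetric] sB_def[symmetric] sXB_def[symmetric] H_sX H_sXB by simp

lemma coh_formula: "coherent_info dB dE (nX, dA, rho) = (\<Sum>x<nX. p x * (vN_entropy (beta x) - vN_entropy (tau x)))"
  unfolding coherent_info_def sXB_def[symmetric] sXAB_def[symmetric] H_sXB H_sXAB by (simp add: right_diff_distrib sum_subtractf)

lemma mutual_bound: "mutual_XB dB dE (nX, dA, rho) \<le> 2 * real dB"
proof -
  have "(\<Sum>x<nX. p x * vN_entropy (beta x)) \<ge> 0"
    using entropy_bounds beta_props p0 by (intro sum_nonneg mult_nonneg_nonneg) auto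
  moreover have "vN_entropy sB \<le> 2 * real dB" using entropy_bounds[OF sB_dim] sB_props by auto
  ultimately show ?thesis unfolding mutual_formula by simp
qed

end




context cqs begin

lemma iso_norm:
  "(\<Sum>b<dB. \<Sum>e<dE. (\<Sum>c<dAp. V $$ (b*dE+e, c) * f c) * cnj (\<Sum>c<dAp. V $$ (b*dE+e, c) * f c)) = (\<Sum>c<dAp. f c * cnj (f c))"
proof -
  have isoe: "(\<Sum>r<dB*dE. cnj (V $$ (r,c')) * V $$ (r,c)) = (if c' = c then 1 else 0)" if "c < dAp" "c' < dAp" for c c'
  proof -
    have "(adj V * V) $$ (c',c) = (\<Sum>r<dB*dE. cnj (V $$ (r,c')) * V $$ (r,c))"
      using V that unfolding adj_def by (auto simp: scalar_prod_def atLeast0LessThan)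
    then show ?thesis using iso that by simp
  qed
  have "(\<Sum>b<dB. \<Sum>e<dE. (\<Sum>c<dAp. V $$ (b*dE+e, c) * f c) * cnj (\<Sum>c<dAp. V $$ (b*dE+e, c) * f c)) = (\<Sum>r<dB*dE. (\<Sum>c<dAp. V $$ (r,c) * f c) * cnj (\<Sum>c<dAp. V $$ (r,c) * f c))"
    by (subst sum_prod_index) simp
  also have "\<dots> = (\<Sum>r<dB*dE. \<Sum>c<dAp. \<Sum>c'<dAp. f c * cnj (f c') * (cnj (V $$ (r,c')) * V $$ (r,c)))"
    by (simp add: sum_distrib_left sum_distrib_right mult_ac) (rule sum.cong[OF refl], rule sum.swap)
  also have "\<dots> = (\<Sum>c<dAp. \<Sum>c'<dAp. \<Sum>r<dB*dE. f c * cnj (f c') * (cnj (V $$ (r,c')) * V $$ (r,c)))"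
    by (rule sum_swap3[symmetric])
  also have "\<dots> = (\<Sum>c<dAp. \<Sum>c'<dAp. f c * cnj (f c') * (if c' = c then 1 else 0))"
    using isoe by (simp add: sum_distrib_left[symmetric])
  also have "\<dots> = (\<Sum>c<dAp. f c * cnj (f c))"
    by (intro sum.cong refl) (simp add: if_distrib sum.delta cong: if_cong)
  finally show ?thesis .
qed

definition alpha :: "nat \<Rightarrow> complex mat" where
  "alpha x = mat dAp dAp (\<lambda>(c,c'). \<Sum>a<dA. \<psi> x $ (a*dAp+c) * cnj (\<psi> x $ (a*dAp+c')))"

lemma alpha_props:
  assumes x: "x < nX"
  shows "alpha x \<in> carrier_mat dAp dAp \<and> herm dAp (alpha x) \<and> psd dAp (alpha x) \<and> tr dAp (alpha x) = 1"
proof -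
  have g: "alpha x \<in> carrier_mat dAp dAp \<and> herm dAp (alpha x) \<and> psd dAp (alpha x) \<and> tr dAp (alpha x) =
     (\<Sum>a<dA. \<Sum>c<dAp. \<psi> x $ (a*dAp+c) * cnj (\<psi> x $ (a*dAp+c)))"
    by (rule gram_props) (simp add: alpha_def)
  then show ?thesis using psi_norm x by simp
qed

lemma decomp_exists:
  "\<exists>UU qq. \<forall>x<nX. onb dAp (UU x) \<and> (\<forall>y<dAp. qq x y \<ge> 0) \<and> (\<Sum>y<dAp. qq x y) = 1 \<and>
     (\<forall>c<dAp. \<forall>c'<dAp. alpha x $$ (c,c') = (\<Sum>y<dAp. complex_of_real (qq x y) * UU x y c * cnj (UU x y c')))"
proof -
  have "\<forall>x\<in>{..<nX}. \<exists>Uq. onb dAp (fst Uq) \<and> (\<forall>y<dAp. snd Uq y \<ge> 0) \<and> (\<Sum>y<dAp. snd Uq y) = 1 \<and>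
     (\<forall>c<dAp. \<forall>c'<dAp. alpha x $$ (c,c') = (\<Sum>y<dAp. complex_of_real (snd Uq y) * fst Uq y c * cnj (fst Uq y c')))"
  proof
    fix x assume x: "x \<in> {..<nX}"
    have A: "alpha x \<in> carrier_mat dAp dAp" "herm dAp (alpha x)" using alpha_props x by auto
    obtain e d where H: "onb dAp e \<and> (\<forall>k<dAp. \<forall>a<dAp. mv dAp (alpha x) (e k) a = complex_of_real (d k) * e k a)
     \<and> (\<forall>a<dAp. \<forall>b<dAp. alpha x $$ (a,b) = (\<Sum>k<dAp. complex_of_real (d k) * e k a * cnj (e k b)))
     \<and> vN_entropy (alpha x) = (\<Sum>k<dAp. eta (d k))
     \<and> tr dAp (alpha x) = complex_of_real (\<Sum>k<dAp. d k)
     \<and> (\<forall>z. ip dAp (mv dAp (alpha x) z) z = complex_of_real (\<Sum>k<dAp. d k * (cmod (ip dAp z (e k)))^2))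
     \<and> (psd dAp (alpha x) \<longrightarrow> (\<forall>k<dAp. d k \<ge> 0))" using spec_full[OF A] by blast
    have "(\<Sum>k<dAp. d k) = 1" using H alpha_props x by (metis lessThan_iff of_real_eq_1_iff)
    then show "\<exists>Uq. onb dAp (fst Uq) \<and> (\<forall>y<dAp. snd Uq y \<ge> 0) \<and> (\<Sum>y<dAp. snd Uq y) = 1 \<and>
     (\<forall>c<dAp. \<forall>c'<dAp. alpha x $$ (c,c') = (\<Sum>y<dAp. complex_of_real (snd Uq y) * fst Uq y c * cnj (fst Uq y c')))"
      using H alpha_props x by (intro exI[of _ "(e,d)"]) auto
  qed
  from bchoice[OF this] obtain F where F: "\<forall>x\<in>{..<nX}. onb dAp (fst (F x)) \<and> (\<forall>y<dAp. snd (F x) y \<ge> 0) \<and> (\<Sum>y<dAp. snd (F x) y) = 1 \<and>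
     (\<forall>c<dAp. \<forall>c'<dAp. alpha x $$ (c,c') = (\<Sum>y<dAp. complex_of_real (snd (F x) y) * fst (F x) y c * cnj (fst (F x) y c')))" by blast
  show ?thesis by (rule exI[of _ "\<lambda>x. fst (F x)"], rule exI[of _ "\<lambda>x. snd (F x)"]) (use F in auto)
qed

end

locale cqs2 = cqs +
  fixes UU :: "nat \<Rightarrow> nat \<Rightarrow> nat \<Rightarrow> complex" and qq :: "nat \<Rightarrow> nat \<Rightarrow> real"
  assumes dec: "\<And>x. x < nX \<Longrightarrow> onb dAp (UU x) \<and> (\<forall>y<dAp. qq x y \<ge> 0) \<and> (\<Sum>y<dAp. qq x y) = 1 \<and>
     (\<forall>c<dAp. \<forall>c'<dAp. alpha x $$ (c,c') = (\<Sum>y<dAp. complex_of_real (qq x y) * UU x y c * cnj (UU x y c')))"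
begin

definition wy where "wy x y b e = (\<Sum>c<dAp. V $$ (b*dE+e, c) * UU x y c)"
definition betay where "betay x y = mat dB dB (\<lambda>(b,b'). \<Sum>e<dE. wy x y b e * cnj (wy x y b' e))"
definition epsy where "epsy x y = mat dE dE (\<lambda>(e,e'). \<Sum>b<dB. wy x y b e * cnj (wy x y b e'))"
definition eps where "eps x = mat dE dE (\<lambda>(e,e'). \<Sum>a<dA. \<Sum>b<dB. w x a b e * cnj (w x a b e'))"

lemma bilin:
  assumes x: "x < nX"
  shows "(\<Sum>a<dA. (\<Sum>c<dAp. K1 c * \<psi> x $ (a*dAp+c)) * cnj (\<Sum>c<dAp. K2 c * \<psi> x $ (a*dAp+c)))
       = (\<Sum>y<dAp. complex_of_real (qq x y) * ((\<Sum>c<dAp. K1 c * UU x y c) * cnj (\<Sum>c<dAp. K2 c * UU x y c)))"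
proof -
  have "(\<Sum>a<dA. (\<Sum>c<dAp. K1 c * \<psi> x $ (a*dAp+c)) * cnj (\<Sum>c<dAp. K2 c * \<psi> x $ (a*dAp+c)))
     = (\<Sum>a<dA. \<Sum>c<dAp. \<Sum>c'<dAp. K1 c * cnj (K2 c') * (\<psi> x $ (a*dAp+c) * cnj (\<psi> x $ (a*dAp+c'))))"
    by (simp add: sum_distrib_left sum_distrib_right mult_ac) (rule sum.cong[OF refl], rule sum.swap)
  also have "\<dots> = (\<Sum>c<dAp. \<Sum>c'<dAp. \<Sum>a<dA. K1 c * cnj (K2 c') * (\<psi> x $ (a*dAp+c) * cnj (\<psi> x $ (a*dAp+c'))))"
    by (rule sum_swap3[symmetric])
  also have "\<dots> = (\<Sum>c<dAp. \<Sum>c'<dAp. K1 c * cnj (K2 c') * alpha x $$ (c,c'))"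
    unfolding alpha_def by (intro sum.cong refl) (simp add: sum_distrib_left)
  also have "\<dots> = (\<Sum>c<dAp. \<Sum>c'<dAp. \<Sum>y<dAp. K1 c * cnj (K2 c') * (complex_of_real (qq x y) * UU x y c * cnj (UU x y c')))"
    using dec[OF x] by (intro sum.cong refl) (simp add: sum_distrib_left)
  also have "\<dots> = (\<Sum>y<dAp. \<Sum>c<dAp. \<Sum>c'<dAp. K1 c * cnj (K2 c') * (complex_of_real (qq x y) * UU x y c * cnj (UU x y c')))"
    by (rule sum_swap3)
  also have "\<dots> = (\<Sum>y<dAp. complex_of_real (qq x y) * ((\<Sum>c<dAp. K1 c * UU x y c) * cnj (\<Sum>c<dAp. K2 c * UU x y c)))"
    by (simp add: sum_distrib_left sum_distrib_right mult_ac) (rule sum.cong[OF refl], rule sum.swap)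
  finally show ?thesis .
qed

lemma w_bilin:
  assumes x: "x < nX"
  shows "(\<Sum>a<dA. w x a b e * cnj (w x a b' e')) = (\<Sum>y<dAp. complex_of_real (qq x y) * (wy x y b e * cnj (wy x y b' e')))"
  unfolding w_def wy_def by (rule bilin[OF x])

lemma beta_dec:
  assumes x: "x < nX"
  shows "\<forall>b<dB. \<forall>b'<dB. beta x $$ (b,b') = (\<Sum>y<dAp. complex_of_real (qq x y) * betay x y $$ (b,b'))"
proof (intro allI impI)
  fix b b' assume bb: "b < dB" "b' < dB"
  have "beta x $$ (b,b') = (\<Sum>e<dE. \<Sum>a<dA. w x a b e * cnj (w x a b' e))"
    unfolding beta_def using bb by simp (rule sum.swap)
  also have "\<dots> = (\<Sum>e<dE. \<Sum>y<dAp. complex_of_real (qq x y) * (wy x y b e * cnj (wy x y b' e)))"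
    using w_bilin[OF x] by simp
  also have "\<dots> = (\<Sum>y<dAp. complex_of_real (qq x y) * betay x y $$ (b,b'))"
    unfolding betay_def using bb by (subst sum.swap) (simp add: sum_distrib_left)
  finally show "beta x $$ (b,b') = (\<Sum>y<dAp. complex_of_real (qq x y) * betay x y $$ (b,b'))" .
qed

lemma eps_dec:
  assumes x: "x < nX"
  shows "\<forall>e<dE. \<forall>e'<dE. eps x $$ (e,e') = (\<Sum>y<dAp. complex_of_real (qq x y) * epsy x y $$ (e,e'))"
proof (intro allI impI)
  fix e e' assume ee: "e < dE" "e' < dE"
  have "eps x $$ (e,e') = (\<Sum>b<dB. \<Sum>a<dA. w x a b e * cnj (w x a b e'))"
    unfolding eps_def using ee by simp (rule sum.swap)
  also have "\<dots> = (\<Sum>b<dB. \<Sum>y<dAp. complex_of_real (qq x y) * (wy x y b e * cnj (wy x y b e')))"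
    using w_bilin[OF x] by simp
  also have "\<dots> = (\<Sum>y<dAp. complex_of_real (qq x y) * epsy x y $$ (e,e'))"
    unfolding epsy_def using ee by (subst sum.swap) (simp add: sum_distrib_left)
  finally show "eps x $$ (e,e') = (\<Sum>y<dAp. complex_of_real (qq x y) * epsy x y $$ (e,e'))" .
qed

lemma wy_norm:
  assumes x: "x < nX" and y: "y < dAp"
  shows "(\<Sum>b<dB. \<Sum>e<dE. wy x y b e * cnj (wy x y b e)) = 1"
proof -
  have "(\<Sum>b<dB. \<Sum>e<dE. wy x y b e * cnj (wy x y b e)) = (\<Sum>c<dAp. UU x y c * cnj (UU x y c))"
    unfolding wy_def by (rule iso_norm)
  also have "\<dots> = 1" using dec[OF x] y unfolding onb_def by auto
  finally show ?thesis .
qed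

lemma betay_props:
  assumes x: "x < nX" and y: "y < dAp"
  shows "betay x y \<in> carrier_mat dB dB \<and> herm dB (betay x y) \<and> psd dB (betay x y) \<and> tr dB (betay x y) = 1"
proof -
  have g: "betay x y \<in> carrier_mat dB dB \<and> herm dB (betay x y) \<and> psd dB (betay x y) \<and> tr dB (betay x y) =
     (\<Sum>e<dE. \<Sum>b<dB. wy x y b e * cnj (wy x y b e))"
    by (rule gram_props) (simp add: betay_def)
  then show ?thesis using wy_norm[OF x y] by (simp add: sum.swap[of _ "{..<dE}"])
qed

lemma epsy_props:
  assumes x: "x < nX" and y: "y < dAp"
  shows "epsy x y \<in> carrier_mat dE dE \<and> herm dE (epsy x y) \<and> psd dE (epsy x y) \<and> tr dE (epsy x y) = 1"
proof -
  have g: "epsy x y \<in> carrier_mat dE dE \<and> herm dE (epsy x y) \<and> psd dE (epsy x y) \<and> tr dE (epsy x y) =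
     (\<Sum>b<dB. \<Sum>e<dE. wy x y b e * cnj (wy x y b e))"
    by (rule gram_props) (simp add: epsy_def)
  then show ?thesis using wy_norm[OF x y] by simp
qed

lemma eps_props:
  assumes x: "x < nX"
  shows "eps x \<in> carrier_mat dE dE \<and> herm dE (eps x)"
proof -
  have "eps x = mat dE dE (\<lambda>(e,e'). \<Sum>k<dA*dB. w x (k div dB) (k mod dB) e * cnj (w x (k div dB) (k mod dB) e'))"
    unfolding eps_def by (intro cong_mat refl) (auto simp: sum_prod_index)
  from gram_props[OF this] show ?thesis by simp
qed

lemma H_betay_epsy:
  "vN_entropy (betay x y) = vN_entropy (epsy x y)"
  unfolding betay_def epsy_def by (rule pure_equal) simp_all

lemma H_tau_eps:
  "vN_entropy (tau x) = vN_entropy (eps x)"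
proof -
  have "eps x = mat dE dE (\<lambda>(e,e'). \<Sum>s<dA*dB. w x (s div dB) (s mod dB) e * cnj (w x (s div dB) (s mod dB) e'))"
    unfolding eps_def by (intro cong_mat refl) (auto simp: sum_prod_index)
  then show ?thesis unfolding tau_def by (intro pure_equal[where W = "\<lambda>s e. w x (s div dB) (s mod dB) e"]) simp_all
qed

lemma H_beta_ge:
  assumes x: "x < nX"
  shows "(\<Sum>y<dAp. qq x y * vN_entropy (betay x y)) \<le> vN_entropy (beta x)"
  by (rule concavity) (use betay_props x dec beta_props beta_dec in auto)

lemma H_eps_ge:
  assumes x: "x < nX"
  shows "(\<Sum>y<dAp. qq x y * vN_entropy (betay x y)) \<le> vN_entropy (eps x)"
  unfolding H_betay_epsy by (rule concavity) (use epsy_props x dec eps_props eps_dec in auto)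

lemma main_ineq:
  assumes lam: "0 \<le> lam" "lam \<le> 1"
  shows "mutual_XB dB dE (nX, dA, rho) + lam * coherent_info dB dE (nX, dA, rho)
     \<le> vN_entropy sB - (\<Sum>x<nX. p x * (\<Sum>y<dAp. qq x y * vN_entropy (betay x y)))"
proof -
  have "mutual_XB dB dE (nX, dA, rho) + lam * coherent_info dB dE (nX, dA, rho)
      = vN_entropy sB - (\<Sum>x<nX. p x * ((1 - lam) * vN_entropy (beta x) + lam * vN_entropy (eps x)))"
    unfolding mutual_formula coh_formula H_tau_eps
    by (simp add: sum_distrib_left sum_subtractf[symmetric] sum.distrib[symmetric] algebra_simps)
  also have "\<dots> \<le> vN_entropy sB - (\<Sum>x<nX. p x * (\<Sum>y<dAp. qq x y * vN_entropy (betay x y)))"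
  proof -
    have "p x * (\<Sum>y<dAp. qq x y * vN_entropy (betay x y)) \<le> p x * ((1 - lam) * vN_entropy (beta x) + lam * vN_entropy (eps x))"
      if x: "x < nX" for x
    proof -
      let ?h = "\<Sum>y<dAp. qq x y * vN_entropy (betay x y)"
      have "?h = (1 - lam) * ?h + lam * ?h" by (simp add: algebra_simps)
      also have "\<dots> \<le> (1 - lam) * vN_entropy (beta x) + lam * vN_entropy (eps x)"
        using H_beta_ge[OF x] H_eps_ge[OF x] lam by (intro add_mono mult_left_mono) auto
      finally show ?thesis using p0[OF x] by (intro mult_left_mono) auto
    qed
    then have "(\<Sum>x<nX. p x * (\<Sum>y<dAp. qq x y * vN_entropy (betay x y))) \<le> (\<Sum>x<nX. p x * ((1 - lam) * vN_entropy (beta x) + lam * vN_entropy (eps x)))"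
      by (intro sum_mono) auto
    then show ?thesis by simp
  qed
  finally show ?thesis .
qed

end




context cqs2 begin

definition p2 where "p2 X = p (X div dAp) * qq (X div dAp) (X mod dAp)"
definition psi2 where "psi2 X = vec (1*dAp) (\<lambda>c. UU (X div dAp) (X mod dAp) c)"

lemma sigma_cqs: "cqs dAp dB dE V (nX*dAp) 1 p2 psi2"
proof
  show "V \<in> carrier_mat (dB*dE) dAp" by (rule V)
  show "adj V * V = 1\<^sub>m dAp" by (rule iso)
  fix X assume X: "X < nX*dAp"
  have dp: "dAp > 0" using X by (cases dAp) auto
  have x: "X div dAp < nX" and y: "X mod dAp < dAp" using X dp by (auto simp: less_mult_imp_div_less)
  have "psi2 X \<bullet>c psi2 X = (\<Sum>c<dAp. UU (X div dAp) (X mod dAp) c * cnj (UU (X div dAp) (X mod dAp) c))"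
    unfolding psi2_def by (simp add: scalar_prod_def atLeast0LessThan)
  also have "\<dots> = 1" using dec[OF x] y unfolding onb_def by auto
  finally show "psi2 X \<in> carrier_vec (1*dAp) \<and> psi2 X \<bullet>c psi2 X = 1" unfolding psi2_def by simp
  show "0 \<le> p2 X" unfolding p2_def using p0[OF x] dec[OF x] y by auto
next
  have "(\<Sum>X<nX*dAp. p2 X) = (\<Sum>x<nX. \<Sum>y<dAp. p2 (x*dAp+y))" by (rule sum_prod_index)
  also have "\<dots> = (\<Sum>x<nX. \<Sum>y<dAp. p x * qq x y)" unfolding p2_def by (intro sum.cong refl) auto
  also have "\<dots> = (\<Sum>x<nX. p x)" using dec by (simp add: sum_distrib_left[symmetric])
  finally show "(\<Sum>X<nX*dAp. p2 X) = 1" using p1 by simp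
qed

lemma sigma_result:
  "(nX*dAp, 1, cq_state (nX*dAp) 1 V p2 psi2) \<in> admissible_states dAp dB dE V \<and>
   mutual_XB dB dE (nX*dAp, 1, cq_state (nX*dAp) 1 V p2 psi2) = vN_entropy sB - (\<Sum>x<nX. p x * (\<Sum>y<dAp. qq x y * vN_entropy (betay x y)))"
proof -
  interpret S: cqs dAp dB dE V "nX*dAp" 1 p2 psi2 by (rule sigma_cqs)
  have adm: "(nX*dAp, 1, cq_state (nX*dAp) 1 V p2 psi2) \<in> admissible_states dAp dB dE V"
    unfolding admissible_states_def using S.psi S.p0 S.p1 by blast
  have Sw: "S.w X 0 b e = wy (X div dAp) (X mod dAp) b e" if "X < nX*dAp" for X b e
    unfolding S.w_def wy_def psi2_def by (intro sum.cong refl) auto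
  have Sbeta: "S.beta X = betay (X div dAp) (X mod dAp)" if "X < nX*dAp" for X
    unfolding S.beta_def betay_def using Sw[OF that] by (intro cong_mat refl) auto
  have SsB: "S.sB = sB"
  proof (rule eq_matI)
    show "dim_row S.sB = dim_row sB" "dim_col S.sB = dim_col sB" using S.sB_dim sB_dim by auto
    fix b b' assume bb: "b < dim_row sB" "b' < dim_col sB"
    then have bb: "b < dB" "b' < dB" using sB_dim by auto
    have "S.sB $$ (b,b') = (\<Sum>X<nX*dAp. complex_of_real (p2 X) * S.beta X $$ (b,b'))" by (rule S.sB_entry[OF bb])
    also have "\<dots> = (\<Sum>x<nX. \<Sum>y<dAp. complex_of_real (p2 (x*dAp+y)) * S.beta (x*dAp+y) $$ (b,b'))" by (rule sum_prod_index)
    also have "\<dots> = (\<Sum>x<nX. \<Sum>y<dAp. complex_of_real (p x) * (complex_of_real (qq x y) * betay x y $$ (b,b')))"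
    proof (intro sum.cong refl)
      fix x y assume x: "x \<in> {..<nX}" and y: "y \<in> {..<dAp}"
      have "x*dAp+y < nX*dAp" using idx_bound x y by auto
      then show "complex_of_real (p2 (x*dAp+y)) * S.beta (x*dAp+y) $$ (b,b') = complex_of_real (p x) * (complex_of_real (qq x y) * betay x y $$ (b,b'))"
        using Sbeta y unfolding p2_def by auto
    qed
    also have "\<dots> = (\<Sum>x<nX. complex_of_real (p x) * beta x $$ (b,b'))"
      using beta_dec bb by (simp add: sum_distrib_left)
    also have "\<dots> = sB $$ (b,b')" using sB_entry[OF bb] by simp
    finally show "S.sB $$ (b,b') = sB $$ (b,b')" .
  qed
  have "mutual_XB dB dE (nX*dAp, 1, cq_state (nX*dAp) 1 V p2 psi2) = vN_entropy S.sB - (\<Sum>X<nX*dAp. p2 X * vN_entropy (S.beta X))"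
    using S.mutual_formula unfolding S.rho_def .
  also have "(\<Sum>X<nX*dAp. p2 X * vN_entropy (S.beta X)) = (\<Sum>x<nX. \<Sum>y<dAp. p2 (x*dAp+y) * vN_entropy (S.beta (x*dAp+y)))"
    by (rule sum_prod_index)
  also have "\<dots> = (\<Sum>x<nX. p x * (\<Sum>y<dAp. qq x y * vN_entropy (betay x y)))"
  proof (intro sum.cong refl)
    fix x assume x: "x \<in> {..<nX}"
    have "(\<Sum>y<dAp. p2 (x*dAp+y) * vN_entropy (S.beta (x*dAp+y))) = (\<Sum>y<dAp. p x * (qq x y * vN_entropy (betay x y)))"
    proof (intro sum.cong refl)
      fix y assume y: "y \<in> {..<dAp}"
      have "x*dAp+y < nX*dAp" using idx_bound x y by auto
      then show "p2 (x*dAp+y) * vN_entropy (S.beta (x*dAp+y)) = p x * (qq x y * vN_entropy (betay x y))"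
        using Sbeta y unfolding p2_def by auto
    qed
    then show "(\<Sum>y<dAp. p2 (x*dAp+y) * vN_entropy (S.beta (x*dAp+y))) = p x * (\<Sum>y<dAp. qq x y * vN_entropy (betay x y))"
      by (simp add: sum_distrib_left)
  qed
  finally show ?thesis using adm SsB by simp
qed

end

lemma adm_cqs:
  assumes iso: "isometry dA' dB dE V" and t: "t \<in> admissible_states dA' dB dE V"
  shows "\<exists>nX dA p \<psi>. t = (nX, dA, cq_state nX dA V p \<psi>) \<and> cqs dA' dB dE V nX dA p \<psi>"
proof -
  from t obtain nX dA \<rho> p \<psi> where t': "t = (nX, dA, \<rho>)" and c: "0 < dA" "\<forall>x<nX. 0 \<le> p x" "(\<Sum>x<nX. p x) = 1"
    "\<forall>x<nX. \<psi> x \<in> carrier_vec (dA * dA') \<and> \<psi> x \<bullet>c \<psi> x = 1" and r: "\<rho> = cq_state nX dA V p \<psi>"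
    unfolding admissible_states_def by blast
  have "cqs dA' dB dE V nX dA p \<psi>" using iso c unfolding isometry_def by unfold_locales auto
  then show ?thesis using t' r by blast
qed

lemma key:
  assumes iso: "isometry dA' dB dE V" and lam: "0 \<le> lam" "lam \<le> 1" and t: "t \<in> admissible_states dA' dB dE V"
  shows "\<exists>\<sigma>\<in>admissible_states dA' dB dE V. mutual_XB dB dE t + lam * coherent_info dB dE t \<le> mutual_XB dB dE \<sigma>"
proof -
  obtain nX dA p \<psi> where t': "t = (nX, dA, cq_state nX dA V p \<psi>)" and C: "cqs dA' dB dE V nX dA p \<psi>"
    using adm_cqs[OF iso t] by blast
  interpret C: cqs dA' dB dE V nX dA p \<psi> by (rule C)
  obtain UU qq where UQ: "\<forall>x<nX. onb dA' (UU x) \<and> (\<forall>y<dA'. qq x y \<ge> 0) \<and> (\<Sum>y<dA'. qq x y) = 1 \<and>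
     (\<forall>c<dA'. \<forall>c'<dA'. C.alpha x $$ (c,c') = (\<Sum>y<dA'. complex_of_real (qq x y) * UU x y c * cnj (UU x y c')))"
    using C.decomp_exists by blast
  interpret C2: cqs2 dA' dB dE V nX dA p \<psi> UU qq by unfold_locales (use UQ in blast)
  have "mutual_XB dB dE t + lam * coherent_info dB dE t \<le> vN_entropy C.sB - (\<Sum>x<nX. p x * (\<Sum>y<dA'. qq x y * vN_entropy (C2.betay x y)))"
    using C2.main_ineq[OF lam] unfolding t' C.rho_def .
  then show ?thesis using C2.sigma_result
    by (intro bexI[of _ "(nX*dA', 1, cq_state (nX*dA') 1 V C2.p2 C2.psi2)"]) simp_all
qed

lemma bdd:
  assumes iso: "isometry dA' dB dE V"
  shows "bdd_above (mutual_XB dB dE ` admissible_states dA' dB dE V)"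
proof (rule bdd_aboveI2)
  fix t assume t: "t \<in> admissible_states dA' dB dE V"
  obtain nX dA p \<psi> where t': "t = (nX, dA, cq_state nX dA V p \<psi>)" and C: "cqs dA' dB dE V nX dA p \<psi>"
    using adm_cqs[OF iso t] by blast
  interpret C: cqs dA' dB dE V nX dA p \<psi> by (rule C)
  show "mutual_XB dB dE t \<le> 2 * real dB" using C.mutual_bound unfolding t' C.rho_def .
qed

theorem mainTheorem5:
  fixes dA' dB dE :: nat and V :: "complex mat" and lam :: real
    and s :: "nat \<times> nat \<times> complex mat"
  assumes "isometry dA' dB dE V"
    and "0 \<le> lam" and "lam < 1"
    and "s \<in> admissible_states dA' dB dE V"
  shows "mutual_XB dB dE s + lam * coherent_info dB dE s
           \<le> Sup (mutual_XB dB dE ` admissible_states dA' dB dE V)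
         \<and> f_lambda dA' dB dE V lam \<le> f_lambda dA' dB dE V 0"
proof -
  have lam: "0 \<le> lam" "lam \<le> 1" using assms by auto
  have B: "bdd_above (mutual_XB dB dE ` admissible_states dA' dB dE V)" by (rule bdd[OF assms(1)])
  have all: "mutual_XB dB dE t + lam * coherent_info dB dE t \<le> Sup (mutual_XB dB dE ` admissible_states dA' dB dE V)"
    if t: "t \<in> admissible_states dA' dB dE V" for t
  proof -
    obtain \<sigma> where \<sigma>: "\<sigma> \<in> admissible_states dA' dB dE V" and le: "mutual_XB dB dE t + lam * coherent_info dB dE t \<le> mutual_XB dB dE \<sigma>"
      using key[OF assms(1) lam t] by blast
    have "mutual_XB dB dE \<sigma> \<le> Sup (mutual_XB dB dE ` admissible_states dA' dB dE V)"
      using \<sigma> B by (intro cSup_upper) auto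
    then show ?thesis using le by linarith
  qed
  have ne: "admissible_states dA' dB dE V \<noteq> {}" using assms(4) by auto
  have "f_lambda dA' dB dE V lam \<le> Sup (mutual_XB dB dE ` admissible_states dA' dB dE V)"
    unfolding f_lambda_def using ne all by (intro cSUP_least) auto
  moreover have "f_lambda dA' dB dE V 0 = Sup (mutual_XB dB dE ` admissible_states dA' dB dE V)"
    unfolding f_lambda_def by simp
  ultimately show ?thesis using all[OF assms(4)] by simp
qed



end
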